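(* In the setting described in the context, let $\sigma_w,\sigma_v$ be real scalars and consider the system $$\tilde\Sigma_\tau(s)=R^T\big(sI+L_{e,s}^\tau RWR^T\big)^{-1}\begin{bmatrix}\sigma_wD_\tau^TE^{-1/2} & -\sigma_vL_{e,s}^\tau RW^{1/2}\end{bmatrix}.$$ Then $\|\tilde\Sigma_\tau\|_\infty^2=\bar\sigma(Z)$, where $$Z=\sigma_w^2R^T\big(RWR^TL_{e,s}^\tau RWR^T\big)^{-1}R+\sigma_v^2R^T\big(RWR^T\big)^{-1}R.$$
   Context: Let $\mathcal G$ be an undirected, connected graph without self-loops, with node set $\{1,\dots,n\}$ ($n\ge2$) and edge set $\mathcal E$, $m=|\mathcal E|$. Give each edge an arbitrary orientation; the incidence matrix $D\in\mathbb R^{n\times m}$ has $D_{il}=1$ if node $i$ is the initial node of edge $l$, $-1$ if it is the terminal node, and $0$ otherwise. Fix a spanning tree $\mathcal G_\tau$ and order the edges so the first $n-1$ are tree edges; write $D=[D_\tau\ D_c]$ with $D_\tau\in\mathbb R^{n\times(n-1)}$. Set $T_\tau^c=(D_\tau^TD_\tau)^{-1}D_\tau^TD_c$ and $R=[I_{n-1}\ T_\tau^c]\in\mathbb R^{(n-1)\times m}$. Let $W=\mathrm{diag}(w_1,\dots,w_m)$, $w_l>0$, and $E=\mathrm{diag}(\epsilon_1,\dots,\epsilon_n)$, $\epsilon_i>0$; $W^{1/2},E^{-1/2}$ are taken entrywise on the diagonal. Define $L_{e,s}^\tau=D_\tau^TE^{-1}D_\tau$. For a stable transfer matrix $\Phi(s)$,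 $\|\Phi\|_\infty=\sup_{\omega\in\mathbb R}\bar\sigma(\Phi(j\omega))$ where $\bar\sigma$ is the largest singular value. *)

theory Defs
  imports "Jordan_Normal_Form.Schur_Decomposition" "Jordan_Normal_Form.Gauss_Jordan_Elimination"
begin

(* Nodes are 0..<n (paper: 1..n), edges are 0..<m; edge l is oriented from
   src l (initial node) to tgt l (terminal node). *)

definition valid_graph :: "nat \<Rightarrow> nat \<Rightarrow> (nat \<Rightarrow> nat) \<Rightarrow> (nat \<Rightarrow> nat) \<Rightarrow> bool" where
  "valid_graph n m src tgt \<longleftrightarrow>
     (\<forall>l<m. src l < n \<and> tgt l < n \<and> src l \<noteq> tgt l) \<and>
     (\<forall>l<m. \<forall>l'<m. l \<noteq> l' \<longrightarrow> {src l, tgt l} \<noteq> {src l', tgt l'})"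

definition adj_in :: "(nat \<Rightarrow> nat) \<Rightarrow> (nat \<Rightarrow> nat) \<Rightarrow> nat set \<Rightarrow> (nat \<times> nat) set" where
  "adj_in src tgt S = {(i, j). \<exists>l\<in>S. {i, j} = {src l, tgt l}}"

definition connected_in :: "nat \<Rightarrow> (nat \<Rightarrow> nat) \<Rightarrow> (nat \<Rightarrow> nat) \<Rightarrow> nat set \<Rightarrow> bool" where
  "connected_in n src tgt S \<longleftrightarrow> (\<forall>i<n. \<forall>j<n. (i, j) \<in> (adj_in src tgt S)\<^sup>*)"

(* S is the edge set of a spanning tree: it connects all nodes and is minimally
   connected (every edge is a bridge, i.e. there is no cycle). *)
definition spanning_tree :: "nat \<Rightarrow> (nat \<Rightarrow> nat) \<Rightarrow> (nat \<Rightarrow> nat) \<Rightarrow> nat set \<Rightarrow> bool" where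
  "spanning_tree n src tgt S \<longleftrightarrow> connected_in n src tgt S \<and>
     (\<forall>l\<in>S. (src l, tgt l) \<notin> (adj_in src tgt (S - {l}))\<^sup>*)"

definition incidence :: "nat \<Rightarrow> nat \<Rightarrow> (nat \<Rightarrow> nat) \<Rightarrow> (nat \<Rightarrow> nat) \<Rightarrow> real mat" where
  "incidence n m src tgt = mat n m (\<lambda>(i, l). if i = src l then 1 else if i = tgt l then -1 else 0)"

definition D_tau :: "nat \<Rightarrow> nat \<Rightarrow> (nat \<Rightarrow> nat) \<Rightarrow> (nat \<Rightarrow> nat) \<Rightarrow> real mat" where
  "D_tau n m src tgt = mat n (n - 1) (\<lambda>(i, l). incidence n m src tgt $$ (i, l))"

definition D_c :: "nat \<Rightarrow> nat \<Rightarrow> (nat \<Rightarrow> nat) \<Rightarrow> (nat \<Rightarrow> nat) \<Rightarrow> real mat" where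
  "D_c n m src tgt = mat n (m - (n - 1)) (\<lambda>(i, l). incidence n m src tgt $$ (i, l + (n - 1)))"

(* matrix inverse (only used on invertible square matrices) *)
definition minv :: "'a :: field mat \<Rightarrow> 'a mat" where
  "minv A = (case mat_inverse A of Some B \<Rightarrow> B | None \<Rightarrow> 0\<^sub>m (dim_col A) (dim_row A))"

definition hcat :: "'a :: zero mat \<Rightarrow> 'a mat \<Rightarrow> 'a mat" where
  "hcat A B = mat (dim_row A) (dim_col A + dim_col B)
     (\<lambda>(i, j). if j < dim_col A then A $$ (i, j) else B $$ (i, j - dim_col A))"

definition T_tau_c :: "nat \<Rightarrow> nat \<Rightarrow> (nat \<Rightarrow> nat) \<Rightarrow> (nat \<Rightarrow> nat) \<Rightarrow> real mat" where
  "T_tau_c n m src tgt =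
     minv (transpose_mat (D_tau n m src tgt) * D_tau n m src tgt) *
       transpose_mat (D_tau n m src tgt) * D_c n m src tgt"

definition R_mat :: "nat \<Rightarrow> nat \<Rightarrow> (nat \<Rightarrow> nat) \<Rightarrow> (nat \<Rightarrow> nat) \<Rightarrow> real mat" where
  "R_mat n m src tgt = hcat (1\<^sub>m (n - 1)) (T_tau_c n m src tgt)"

(* L_{e,s}^tau = D_tau^T E^{-1} D_tau, E = diag(eps 0, ..., eps (n-1)) *)
definition L_es :: "nat \<Rightarrow> nat \<Rightarrow> (nat \<Rightarrow> nat) \<Rightarrow> (nat \<Rightarrow> nat) \<Rightarrow> (nat \<Rightarrow> real) \<Rightarrow> real mat" where
  "L_es n m src tgt eps =
     transpose_mat (D_tau n m src tgt) * mat_diag n (\<lambda>i. 1 / eps i) * D_tau n m src tgt"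

definition cmat :: "real mat \<Rightarrow> complex mat" where
  "cmat A = map_mat complex_of_real A"

definition Sigma_tau :: "nat \<Rightarrow> nat \<Rightarrow> (nat \<Rightarrow> nat) \<Rightarrow> (nat \<Rightarrow> nat) \<Rightarrow> (nat \<Rightarrow> real) \<Rightarrow>
    (nat \<Rightarrow> real) \<Rightarrow> real \<Rightarrow> real \<Rightarrow> complex \<Rightarrow> complex mat" where
  "Sigma_tau n m src tgt w eps sw sv s =
     (let R = R_mat n m src tgt; L = L_es n m src tgt eps; W = mat_diag m w;
          Dt = D_tau n m src tgt;
          B = hcat (sw \<cdot>\<^sub>m (transpose_mat Dt * mat_diag n (\<lambda>i. 1 / sqrt (eps i))))
                   ((- sv) \<cdot>\<^sub>m (L * R * mat_diag m (\<lambda>l. sqrt (w l))))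
      in cmat (transpose_mat R) *
         minv (s \<cdot>\<^sub>m 1\<^sub>m (n - 1) + cmat (L * R * W * transpose_mat R)) * cmat B)"

definition Z_mat :: "nat \<Rightarrow> nat \<Rightarrow> (nat \<Rightarrow> nat) \<Rightarrow> (nat \<Rightarrow> nat) \<Rightarrow> (nat \<Rightarrow> real) \<Rightarrow>
    (nat \<Rightarrow> real) \<Rightarrow> real \<Rightarrow> real \<Rightarrow> real mat" where
  "Z_mat n m src tgt w eps sw sv =
     (let R = R_mat n m src tgt; L = L_es n m src tgt eps; W = mat_diag m w;
          RWR = R * W * transpose_mat R
      in (sw\<^sup>2) \<cdot>\<^sub>m (transpose_mat R * minv (RWR * L * RWR) * R) +
         (sv\<^sup>2) \<cdot>\<^sub>m (transpose_mat R * minv RWR * R))"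

definition sigma_max :: "complex mat \<Rightarrow> real" where
  "sigma_max A = Max {sqrt (Re k) | k. eigenvalue (mat_adjoint A * A) k}"

definition hinf_norm :: "(complex \<Rightarrow> complex mat) \<Rightarrow> real" where
  "hinf_norm F = (SUP \<omega>::real. sigma_max (F (\<i> * complex_of_real \<omega>)))"

end

theory Submission
  imports Defs "Jordan_Normal_Form.Spectral_Radius"
begin


lemma minv_props:
  fixes A :: "'a :: field mat"
  assumes A: "A \<in> carrier_mat n n"
    and inj: "\<And>v. v \<in> carrier_vec n \<Longrightarrow> A *\<^sub>v v = 0\<^sub>v n \<Longrightarrow> v = 0\<^sub>v n"
  shows "minv A \<in> carrier_mat n n" "A * minv A = 1\<^sub>m n" "minv A * A = 1\<^sub>m n"
proof -
  have "det A \<noteq> 0" using det_0_iff_vec_prod_zero[OF A] inj by blast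
  hence U: "A \<in> Units (ring_mat TYPE('a) n n)" by (rule det_non_zero_imp_unit[OF A])
  obtain B where B: "mat_inverse A = Some B"
    using mat_inverse(1)[OF A, of n] U by (cases "mat_inverse A") auto
  then show "minv A \<in> carrier_mat n n" "A * minv A = 1\<^sub>m n" "minv A * A = 1\<^sub>m n"
    unfolding minv_def using mat_inverse(2)[OF A B] by auto
qed

lemma minv_carrier:
  fixes A :: "'a :: field mat"
  assumes A: "A \<in> carrier_mat n n"
  shows "minv A \<in> carrier_mat n n"
proof (cases "mat_inverse A")
  case None
  then show ?thesis using A unfolding minv_def by auto
next
  case (Some B)
  then show ?thesis unfolding minv_def using mat_inverse(2)[OF A Some] by auto
qed

lemma adj_dim[simp]: "dim_row (mat_adjoint A) = dim_col A" "dim_col (mat_adjoint A) = dim_row A"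
  unfolding mat_adjoint_def by auto

lemma adj_index[simp]: "i < dim_col A \<Longrightarrow> j < dim_row A \<Longrightarrow> mat_adjoint A $$ (i,j) = conjugate (A $$ (j,i))"
  unfolding mat_adjoint_def by (simp add: mat_of_rows_index)

lemma adj_carrier[simp]: "A \<in> carrier_mat a b \<Longrightarrow> mat_adjoint A \<in> carrier_mat b a"
  using carrier_matD[of A a b] by (intro carrier_matI) simp_all

lemma adj_mult:
  fixes A B :: "complex mat"
  assumes "A \<in> carrier_mat a k" "B \<in> carrier_mat k b"
  shows "mat_adjoint (A * B) = mat_adjoint B * mat_adjoint A"
proof -
  have d: "dim_row A = a" "dim_col A = k" "dim_row B = k" "dim_col B = b"
    using assms by (auto dest: carrier_matD)
  show ?thesis
  proof (rule eq_matI)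
    fix i j assume "i < dim_row (mat_adjoint B * mat_adjoint A)" "j < dim_col (mat_adjoint B * mat_adjoint A)"
    then have i: "i < b" and j: "j < a" using d by auto
    show "mat_adjoint (A * B) $$ (i, j) = (mat_adjoint B * mat_adjoint A) $$ (i, j)"
      using i j d by (simp add: scalar_prod_def cnj_sum mult.commute)
  qed (use d in auto)
qed

lemma adj_adj[simp]: "mat_adjoint (mat_adjoint (A :: complex mat)) = A"
  by (intro eq_matI) auto

lemma adj_cmat: "mat_adjoint (cmat A) = cmat (transpose_mat A)"
  by (intro eq_matI) (auto simp: cmat_def)

lemma adj_add: fixes A B :: "complex mat"
  assumes "A \<in> carrier_mat a b" "B \<in> carrier_mat a b"
  shows "mat_adjoint (A + B) = mat_adjoint A + mat_adjoint B"
  using assms by (intro eq_matI) auto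

lemma adj_smult: "mat_adjoint (c \<cdot>\<^sub>m (A :: complex mat)) = cnj c \<cdot>\<^sub>m mat_adjoint A"
  by (intro eq_matI) auto

lemma adj_one[simp]: "mat_adjoint (1\<^sub>m n :: complex mat) = 1\<^sub>m n"
  by (intro eq_matI) auto

lemma cmat_dim[simp]: "dim_row (cmat A) = dim_row A" "dim_col (cmat A) = dim_col A"
  by (auto simp: cmat_def)

lemma cmat_carrier[simp]: "cmat A \<in> carrier_mat a b \<longleftrightarrow> A \<in> carrier_mat a b"
  unfolding carrier_mat_def by (simp only: mem_Collect_eq cmat_dim)

lemma cmat_mult: assumes "A \<in> carrier_mat a k" "B \<in> carrier_mat k b"
  shows "cmat (A * B) = cmat A * cmat B"
  unfolding cmat_def using of_real_hom.mat_hom_mult[OF assms] by simp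

lemma cmat_add: assumes "A \<in> carrier_mat a b" "B \<in> carrier_mat a b"
  shows "cmat (A + B) = cmat A + cmat B"
  using assms by (intro eq_matI) (auto simp: cmat_def)

lemma cmat_smult: "cmat (c \<cdot>\<^sub>m A) = complex_of_real c \<cdot>\<^sub>m cmat A"
  by (intro eq_matI) (auto simp: cmat_def)

lemma cmat_one[simp]: "cmat (1\<^sub>m n) = 1\<^sub>m n"
  by (intro eq_matI) (auto simp: cmat_def)

lemma cmat_transpose: "cmat (transpose_mat A) = transpose_mat (cmat A)"
  by (intro eq_matI) (auto simp: cmat_def)

lemma adj_inner:
  fixes A :: "complex mat"
  assumes A: "A \<in> carrier_mat a b" and u: "u \<in> carrier_vec b" and w: "w \<in> carrier_vec a"
  shows "(A *\<^sub>v u) \<bullet>c w = u \<bullet>c (mat_adjoint A *\<^sub>v w)"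
proof -
  have "(A *\<^sub>v u) \<bullet>c w = (\<Sum>i<a. (\<Sum>j<b. A $$ (i,j) * u $ j) * cnj (w $ i))"
    using assms by (auto simp: scalar_prod_def atLeast0LessThan intro!: sum.cong)
  also have "\<dots> = (\<Sum>i<a. \<Sum>j<b. u $ j * (A $$ (i,j) * cnj (w $ i)))"
    by (intro sum.cong refl) (simp add: sum_distrib_right, intro sum.cong refl, simp add: mult_ac)
  also have "\<dots> = (\<Sum>j<b. \<Sum>i<a. u $ j * (A $$ (i,j) * cnj (w $ i)))"
    by (rule sum.swap)
  also have "\<dots> = u \<bullet>c (mat_adjoint A *\<^sub>v w)"
    using assms by (auto simp: scalar_prod_def atLeast0LessThan cnj_sum sum_distrib_left intro!: sum.cong)
  finally show ?thesis .
qed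


lemma mat_mult_zero_vec[simp]: "A \<in> carrier_mat a b \<Longrightarrow> A *\<^sub>v 0\<^sub>v b = 0\<^sub>v a"
  by (intro eq_vecI) (auto simp: scalar_prod_def)

lemma cnorm_props:
  fixes x :: "complex vec"
  assumes x: "x \<in> carrier_vec n"
  shows "Im (x \<bullet>c x) = 0" "Re (x \<bullet>c x) \<ge> 0" "x \<bullet>c x = complex_of_real (Re (x \<bullet>c x))"
    "Re (x \<bullet>c x) = 0 \<longleftrightarrow> x = 0\<^sub>v n"
proof -
  have ge: "0 \<le> x \<bullet>c x" by (rule conjugate_square_ge_0_vec)
  then show im: "Im (x \<bullet>c x) = 0" and "Re (x \<bullet>c x) \<ge> 0" by (auto simp: less_eq_complex_def)
  then show "x \<bullet>c x = complex_of_real (Re (x \<bullet>c x))" by (simp add: complex_eq_iff)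
  have "Re (x \<bullet>c x) = 0 \<longleftrightarrow> x \<bullet>c x = 0" using im by (auto simp: complex_eq_iff)
  also have "\<dots> \<longleftrightarrow> x = 0\<^sub>v n" using conjugate_square_eq_0_vec[OF x] .
  finally show "Re (x \<bullet>c x) = 0 \<longleftrightarrow> x = 0\<^sub>v n" .
qed

lemma cinner_conj:
  fixes x y :: "complex vec"
  assumes "x \<in> carrier_vec n" "y \<in> carrier_vec n"
  shows "y \<bullet>c x = cnj (x \<bullet>c y)"
  using assms by (simp add: scalar_prod_def cnj_sum mult.commute)

lemma eig_adj_nonneg:
  fixes G :: "complex mat"
  assumes G: "G \<in> carrier_mat a b" and ev: "eigenvalue (mat_adjoint G * G) k"
  shows "Im k = 0" "Re k \<ge> 0"
proof -
  have K: "mat_adjoint G * G \<in> carrier_mat b b" using G by auto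
  obtain v where v: "v \<in> carrier_vec b" "v \<noteq> 0\<^sub>v b" "(mat_adjoint G * G) *\<^sub>v v = k \<cdot>\<^sub>v v"
    using ev K unfolding eigenvalue_def eigenvector_def by auto
  have Gv: "G *\<^sub>v v \<in> carrier_vec a" using G v by auto
  have "k * (v \<bullet>c v) = (k \<cdot>\<^sub>v v) \<bullet>c v" using v by simp
  also have "\<dots> = (mat_adjoint G *\<^sub>v (G *\<^sub>v v)) \<bullet>c v"
    using v(3) assoc_mult_mat_vec[of "mat_adjoint G" b a G b v] G v by simp
  also have "\<dots> = (G *\<^sub>v v) \<bullet>c (G *\<^sub>v v)"
    using adj_inner[of "mat_adjoint G" b a "G *\<^sub>v v" v] G v Gv by simp
  finally have eq: "k * (v \<bullet>c v) = (G *\<^sub>v v) \<bullet>c (G *\<^sub>v v)" .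
  have pos: "Re (v \<bullet>c v) > 0" using cnorm_props[OF v(1)] v(2) by linarith
  have "k * complex_of_real (Re (v \<bullet>c v)) = complex_of_real (Re ((G *\<^sub>v v) \<bullet>c (G *\<^sub>v v)))"
    using eq cnorm_props(3)[OF v(1)] cnorm_props(3)[OF Gv] by metis
  hence "k = complex_of_real (Re ((G *\<^sub>v v) \<bullet>c (G *\<^sub>v v)) / Re (v \<bullet>c v))"
    using pos by (simp add: field_simps)
  then show "Im k = 0" "Re k \<ge> 0" using pos cnorm_props(2)[OF Gv] by auto
qed

lemma eig_adj_share:
  fixes G :: "complex mat"
  assumes G: "G \<in> carrier_mat a b" and ev: "eigenvalue (mat_adjoint G * G) k" and k: "k \<noteq> 0"
  shows "eigenvalue (G * mat_adjoint G) k"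
proof -
  have K: "mat_adjoint G * G \<in> carrier_mat b b" using G by auto
  obtain v where v: "v \<in> carrier_vec b" "v \<noteq> 0\<^sub>v b" "(mat_adjoint G * G) *\<^sub>v v = k \<cdot>\<^sub>v v"
    using ev K unfolding eigenvalue_def eigenvector_def by auto
  have Gv: "G *\<^sub>v v \<in> carrier_vec a" using G v by auto
  have nz: "G *\<^sub>v v \<noteq> 0\<^sub>v a"
  proof
    assume "G *\<^sub>v v = 0\<^sub>v a"
    hence "(mat_adjoint G * G) *\<^sub>v v = 0\<^sub>v b"
      using assoc_mult_mat_vec[of "mat_adjoint G" b a G b v] G v by simp
    hence "k \<cdot>\<^sub>v v = 0\<^sub>v b" using v by simp
    hence kv: "k \<cdot>\<^sub>v v = 0\<^sub>v b" .
    have "v = 0\<^sub>v b"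
    proof (intro eq_vecI)
      fix i assume i: "i < dim_vec (0\<^sub>v b :: complex vec)"
      then have "(k \<cdot>\<^sub>v v) $ i = 0" using kv by simp
      then show "v $ i = 0\<^sub>v b $ i" using k v(1) i by simp
    qed (use v in auto)
    with v show False by simp
  qed
  have "(G * mat_adjoint G) *\<^sub>v (G *\<^sub>v v) = G *\<^sub>v ((mat_adjoint G * G) *\<^sub>v v)"
    using assoc_mult_mat_vec[of "mat_adjoint G" b a G b v] assoc_mult_mat_vec[of G a b "mat_adjoint G" a "G *\<^sub>v v"] G v Gv by simp
  also have "\<dots> = k \<cdot>\<^sub>v (G *\<^sub>v v)" using v G by (simp add: mult_mat_vec)
  finally show ?thesis unfolding eigenvalue_def eigenvector_def using Gv nz G by auto
qed

lemma max_pos_eq: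
  fixes A B :: "real set"
  assumes "finite A" "A \<noteq> {}" "finite B" "B \<noteq> {}" "\<forall>x\<in>A. x \<ge> 0" "\<forall>x\<in>B. x \<ge> 0"
    "\<forall>x\<in>A. x > 0 \<longrightarrow> x \<in> B" "\<forall>x\<in>B. x > 0 \<longrightarrow> x \<in> A"
  shows "Max A = Max B"
proof -
  have le: "Max X \<le> Max Y" if X: "finite X" "X \<noteq> {}" and Y: "finite Y" "Y \<noteq> {}"
    and Y0: "\<forall>x\<in>Y. x \<ge> 0" and XY: "\<forall>x\<in>X. x > 0 \<longrightarrow> x \<in> Y" for X Y :: "real set"
  proof -
    have m: "Max X \<in> X" using X Max_in by blast
    obtain y where y: "y \<in> Y" using Y by auto
    have "0 \<le> Max Y" using y Y0 Max_ge[OF Y(1) y] by force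
    show ?thesis
    proof (cases "Max X > 0")
      case True then have "Max X \<in> Y" using m XY by auto
      then show ?thesis using Max_ge[OF Y(1)] by blast
    next
      case False then show ?thesis using \<open>0 \<le> Max Y\<close> by linarith
    qed
  qed
  have "Max A \<le> Max B" using le[of A B] assms by blast
  moreover have "Max B \<le> Max A" using le[of B A] assms by blast
  ultimately show ?thesis by linarith
qed

lemma max_sq_eq:
  fixes A B :: "real set"
  assumes A: "finite A" "A \<noteq> {}" and B: "finite B" "B \<noteq> {}"
    and A0: "\<forall>x\<in>A. x \<ge> 0" and B0: "\<forall>x\<in>B. x \<ge> 0"
    and AB: "\<forall>x\<in>A. x > 0 \<longrightarrow> x\<^sup>2 \<in> B" and BA: "\<forall>y\<in>B. y > 0 \<longrightarrow> (\<exists>x\<in>A. y = x\<^sup>2)"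
  shows "Max B = (Max A)\<^sup>2"
proof -
  have a: "Max A \<in> A" using A Max_in by blast
  have b: "Max B \<in> B" using B Max_in by blast
  have a0: "Max A \<ge> 0" using a A0 by auto
  have b0: "Max B \<ge> 0" using b B0 by auto
  have 1: "Max B \<le> (Max A)\<^sup>2"
  proof (cases "Max B > 0")
    case True
    then obtain x where x: "x \<in> A" "Max B = x\<^sup>2" using BA b by auto
    have "x \<le> Max A" using Max_ge[OF A(1) x(1)] .
    moreover have "x \<ge> 0" using x A0 by auto
    ultimately show ?thesis using x by (simp add: power_mono)
  next
    case False then show ?thesis using zero_le_power2[of "Max A"] by linarith
  qed
  have 2: "(Max A)\<^sup>2 \<le> Max B"
  proof (cases "Max A > 0")
    case True
    then have "(Max A)\<^sup>2 \<in> B" using AB a by auto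
    then show ?thesis using Max_ge[OF B(1)] by blast
  next
    case False then have "Max A = 0" using a0 by auto
    then show ?thesis using b0 by simp
  qed
  show ?thesis using 1 2 by simp
qed

lemma spec_fin: "(A :: complex mat) \<in> carrier_mat n n \<Longrightarrow> finite {k. eigenvalue A k}"
  using card_finite_spectrum(1) unfolding spectrum_def by auto

lemma spec_ne: "(A :: complex mat) \<in> carrier_mat n n \<Longrightarrow> n > 0 \<Longrightarrow> {k. eigenvalue A k} \<noteq> {}"
  using spectrum_non_empty unfolding spectrum_def by auto

lemma sigma_max_alt:
  fixes G :: "complex mat"
  assumes G: "G \<in> carrier_mat a b" and b: "b > 0"
  shows "sigma_max G = sqrt (Max (Re ` {k. eigenvalue (mat_adjoint G * G) k}))"
    "Max (Re ` {k. eigenvalue (mat_adjoint G * G) k}) \<ge> 0"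
proof -
  let ?S = "{k. eigenvalue (mat_adjoint G * G) k}"
  have K: "mat_adjoint G * G \<in> carrier_mat b b" using G by auto
  have fin: "finite (Re ` ?S)" using spec_fin[OF K] by auto
  have ne: "Re ` ?S \<noteq> {}" using spec_ne[OF K b] by auto
  have "{sqrt (Re k) |k. eigenvalue (mat_adjoint G * G) k} = sqrt ` (Re ` ?S)" by auto
  moreover have "mono sqrt" by (rule monoI) simp
  ultimately show "sigma_max G = sqrt (Max (Re ` ?S))"
    unfolding sigma_max_def using mono_Max_commute[of sqrt, OF _ fin ne] by simp
  obtain k where k: "k \<in> ?S" using spec_ne[OF K b] by auto
  have "Re k \<ge> 0" using eig_adj_nonneg[OF G] k by auto
  moreover have "Re k \<le> Max (Re ` ?S)" using fin k by auto
  ultimately show "Max (Re ` ?S) \<ge> 0" by linarith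
qed

lemma sigma_nonneg:
  fixes G :: "complex mat"
  assumes G: "G \<in> carrier_mat a b" and b: "b > 0"
  shows "sigma_max G \<ge> 0"
  using sigma_max_alt[OF G b] by simp

lemma spec_rad_adj:
  fixes G :: "complex mat"
  assumes G: "G \<in> carrier_mat a b" and a: "a > 0"
  shows "spectral_radius (G * mat_adjoint G) = Max (Re ` {k. eigenvalue (G * mat_adjoint G) k})"
    "spectral_radius (G * mat_adjoint G) \<ge> 0"
proof -
  let ?S = "{k. eigenvalue (G * mat_adjoint G) k}"
  have G': "mat_adjoint G \<in> carrier_mat b a" using G by auto
  have nn: "Im k = 0" "Re k \<ge> 0" if "k \<in> ?S" for k
    using eig_adj_nonneg[OF G', of k] that by auto
  have "norm ` ?S = Re ` ?S"
  proof (intro image_cong refl)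
    fix k assume "k \<in> ?S"
    then show "norm k = Re k" using nn[of k] by (simp add: cmod_eq_Re)
  qed
  then show eq: "spectral_radius (G * mat_adjoint G) = Max (Re ` ?S)"
    unfolding spectral_radius_def spectrum_def by simp
  have K: "G * mat_adjoint G \<in> carrier_mat a a" using G by auto
  obtain k where k: "k \<in> ?S" using spec_ne[OF K a] by auto
  have "Re k \<le> Max (Re ` ?S)" using spec_fin[OF K] k by auto
  then show "spectral_radius (G * mat_adjoint G) \<ge> 0" using eq nn[OF k] by linarith
qed

lemma sigma_sq:
  fixes G :: "complex mat"
  assumes G: "G \<in> carrier_mat a b" and a: "a > 0" and b: "b > 0"
  shows "(sigma_max G)\<^sup>2 = spectral_radius (G * mat_adjoint G)"
proof -
  let ?S1 = "{k. eigenvalue (mat_adjoint G * G) k}"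
  let ?S2 = "{k. eigenvalue (G * mat_adjoint G) k}"
  have G': "mat_adjoint G \<in> carrier_mat b a" using G by auto
  have K1: "mat_adjoint G * G \<in> carrier_mat b b" using G by auto
  have K2: "G * mat_adjoint G \<in> carrier_mat a a" using G by auto
  have "(sigma_max G)\<^sup>2 = Max (Re ` ?S1)" using sigma_max_alt[OF G b] by simp
  also have "\<dots> = Max (Re ` ?S2)"
  proof (rule max_pos_eq)
    show "finite (Re ` ?S1)" "finite (Re ` ?S2)" using spec_fin[OF K1] spec_fin[OF K2] by auto
    show "Re ` ?S1 \<noteq> {}" "Re ` ?S2 \<noteq> {}" using spec_ne[OF K1 b] spec_ne[OF K2 a] by auto
    show "\<forall>x\<in>Re ` ?S1. 0 \<le> x" using eig_adj_nonneg[OF G] by auto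
    show "\<forall>x\<in>Re ` ?S2. 0 \<le> x" using eig_adj_nonneg[OF G'] by auto
    show "\<forall>x\<in>Re ` ?S1. 0 < x \<longrightarrow> x \<in> Re ` ?S2"
    proof (intro ballI impI)
      fix x assume "x \<in> Re ` ?S1" "0 < x"
      then obtain k where k: "eigenvalue (mat_adjoint G * G) k" "x = Re k" by auto
      then have "k \<noteq> 0" using \<open>0 < x\<close> by auto
      then have "k \<in> ?S2" using eig_adj_share[OF G k(1)] by auto
      then show "x \<in> Re ` ?S2" using k by auto
    qed
    show "\<forall>x\<in>Re ` ?S2. 0 < x \<longrightarrow> x \<in> Re ` ?S1"
    proof (intro ballI impI)
      fix x assume "x \<in> Re ` ?S2" "0 < x"
      then obtain k where k: "eigenvalue (G * mat_adjoint G) k" "x = Re k" by auto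
      then have "k \<noteq> 0" using \<open>0 < x\<close> by auto
      then have "k \<in> ?S1" using eig_adj_share[OF G', of k] k by auto
      then show "x \<in> Re ` ?S1" using k by auto
    qed
  qed
  also have "\<dots> = spectral_radius (G * mat_adjoint G)" using spec_rad_adj[OF G a] by simp
  finally show ?thesis .
qed

lemma adj_herm:
  fixes G :: "complex mat"
  assumes G: "G \<in> carrier_mat a b"
  shows "mat_adjoint (G * mat_adjoint G) = G * mat_adjoint G"
  using adj_mult[OF G adj_carrier[OF G]] by simp

lemma sigma_herm:
  fixes G :: "complex mat"
  assumes G: "G \<in> carrier_mat a b" and a: "a > 0" and b: "b > 0"
  shows "sigma_max (G * mat_adjoint G) = spectral_radius (G * mat_adjoint G)"
proof -
  define H where "H = G * mat_adjoint G"
  have G': "mat_adjoint G \<in> carrier_mat b a" using G by auto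
  have H: "H \<in> carrier_mat a a" unfolding H_def using G G' by auto
  have aH: "mat_adjoint H = H" unfolding H_def by (rule adj_herm[OF G])
  let ?S = "{k. eigenvalue H k}"
  let ?T = "{k. eigenvalue (H * H) k}"
  have HH: "H * H \<in> carrier_mat a a" using H by auto
  have nnS: "Im k = 0" "Re k \<ge> 0" if "k \<in> ?S" for k
    using eig_adj_nonneg[OF G', of k] that unfolding H_def by auto
  have nnT: "Im k = 0" "Re k \<ge> 0" if "k \<in> ?T" for k
    using eig_adj_nonneg[OF H, of k] that aH by auto
  have sq: "(sigma_max H)\<^sup>2 = spectral_radius (H * mat_adjoint H)"
    by (rule sigma_sq[OF H a a])
  have rT: "spectral_radius (H * mat_adjoint H) = Max (Re ` ?T)"
    using spec_rad_adj(1)[OF H a] aH by simp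
  have rS: "spectral_radius H = Max (Re ` ?S)"
    using spec_rad_adj(1)[OF G a] unfolding H_def by simp
  have "Max (Re ` ?T) = (Max (Re ` ?S))\<^sup>2"
  proof (rule max_sq_eq)
    show "finite (Re ` ?S)" "finite (Re ` ?T)" using spec_fin[OF H] spec_fin[OF HH] by auto
    show "Re ` ?S \<noteq> {}" "Re ` ?T \<noteq> {}" using spec_ne[OF H a] spec_ne[OF HH a] by auto
    show "\<forall>x\<in>Re ` ?S. 0 \<le> x" using nnS by auto
    show "\<forall>x\<in>Re ` ?T. 0 \<le> x" using nnT by auto
    show "\<forall>x\<in>Re ` ?S. 0 < x \<longrightarrow> x\<^sup>2 \<in> Re ` ?T"
    proof (intro ballI impI)
      fix x assume x: "x \<in> Re ` ?S" "0 < x"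
      then obtain k where k: "eigenvalue H k" "x = Re k" by auto
      have kx: "k = complex_of_real x" using nnS[of k] k by (simp add: complex_eq_iff)
      obtain v where v: "v \<in> carrier_vec a" "v \<noteq> 0\<^sub>v a" "H *\<^sub>v v = k \<cdot>\<^sub>v v"
        using k(1) H unfolding eigenvalue_def eigenvector_def by auto
      have "(H * H) *\<^sub>v v = H *\<^sub>v (H *\<^sub>v v)" using H v by simp
      also have "\<dots> = k \<cdot>\<^sub>v (H *\<^sub>v v)" using v H by (simp add: mult_mat_vec)
      also have "\<dots> = (k * k) \<cdot>\<^sub>v v" using v by (simp add: smult_smult_assoc)
      finally have "eigenvalue (H * H) (k * k)"
        unfolding eigenvalue_def eigenvector_def using v HH H by auto
      moreover have "Re (k * k) = x\<^sup>2" using kx by (simp add: power2_eq_square)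
      ultimately show "x\<^sup>2 \<in> Re ` ?T" by force
    qed
    show "\<forall>y\<in>Re ` ?T. 0 < y \<longrightarrow> (\<exists>x\<in>Re ` ?S. y = x\<^sup>2)"
    proof (intro ballI impI)
      fix y assume y: "y \<in> Re ` ?T" "0 < y"
      then obtain k where k: "eigenvalue (H * H) k" "y = Re k" by auto
      have ky: "k = complex_of_real y" using nnT[of k] k by (simp add: complex_eq_iff)
      obtain u where u: "u \<in> carrier_vec a" "u \<noteq> 0\<^sub>v a" "(H * H) *\<^sub>v u = k \<cdot>\<^sub>v u"
        using k(1) HH unfolding eigenvalue_def eigenvector_def by auto
      define r where "r = sqrt y"
      have r: "r > 0" "r * r = y" using y(2) unfolding r_def by auto
      define w where "w = H *\<^sub>v u + complex_of_real r \<cdot>\<^sub>v u"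
      have Hu: "H *\<^sub>v u \<in> carrier_vec a" using H u by auto
      have w: "w \<in> carrier_vec a" unfolding w_def using Hu u by auto
      have HHu: "H *\<^sub>v (H *\<^sub>v u) = complex_of_real y \<cdot>\<^sub>v u"
        using u(3) H u ky by simp
      have Hw: "H *\<^sub>v w = complex_of_real r \<cdot>\<^sub>v w"
      proof -
        have "H *\<^sub>v w = H *\<^sub>v (H *\<^sub>v u) + complex_of_real r \<cdot>\<^sub>v (H *\<^sub>v u)"
          unfolding w_def using H u Hu by (simp add: mult_add_distrib_mat_vec mult_mat_vec)
        also have "\<dots> = complex_of_real r \<cdot>\<^sub>v w"
          unfolding HHu w_def
        proof (intro eq_vecI)
          fix i assume i: "i < dim_vec (complex_of_real r \<cdot>\<^sub>v (H *\<^sub>v u + complex_of_real r \<cdot>\<^sub>v u))"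
          have yr: "complex_of_real y = complex_of_real r * complex_of_real r" using r(2) by (metis of_real_mult)
          have i': "i < a" using i u by simp
          show "(complex_of_real y \<cdot>\<^sub>v u + complex_of_real r \<cdot>\<^sub>v (H *\<^sub>v u)) $ i =
            (complex_of_real r \<cdot>\<^sub>v (H *\<^sub>v u + complex_of_real r \<cdot>\<^sub>v u)) $ i"
            using i' carrier_vecD[OF u(1)] carrier_vecD[OF Hu] unfolding yr by (simp add: ring_distribs)
        qed (use u Hu H in simp_all)
        finally show ?thesis .
      qed
      have wnz: "w \<noteq> 0\<^sub>v a"
      proof
        assume w0: "w = 0\<^sub>v a"
        have "H *\<^sub>v u = complex_of_real (- r) \<cdot>\<^sub>v u"
        proof (intro eq_vecI)
          fix i assume i: "i < dim_vec (complex_of_real (- r) \<cdot>\<^sub>v u)"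
          have i': "i < a" using i u by simp
          have "w $ i = 0" using w0 i' by simp
          then have "(H *\<^sub>v u) $ i + complex_of_real r * u $ i = 0"
            unfolding w_def using i' u Hu by simp
          then have "(H *\<^sub>v u) $ i = - (complex_of_real r * u $ i)"
            by (simp add: eq_neg_iff_add_eq_0)
          then show "(H *\<^sub>v u) $ i = (complex_of_real (- r) \<cdot>\<^sub>v u) $ i"
            using i' u by simp
        qed (use u Hu H in auto)
        then have "eigenvalue H (complex_of_real (- r))"
          unfolding eigenvalue_def eigenvector_def using u H by auto
        then have "Re (complex_of_real (- r)) \<ge> 0" using nnS(2)[of "complex_of_real (- r)"] by blast
        then show False using r by simp
      qed
      have "eigenvalue H (complex_of_real r)"
        unfolding eigenvalue_def eigenvector_def using w wnz Hw H by auto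
      then have "r \<in> Re ` ?S" by force
      moreover have "y = r\<^sup>2" using r by (simp add: power2_eq_square)
      ultimately show "\<exists>x\<in>Re ` ?S. y = x\<^sup>2" by blast
    qed
  qed
  then have "(sigma_max H)\<^sup>2 = (spectral_radius H)\<^sup>2" using sq rT rS by simp
  moreover have "sigma_max H \<ge> 0" by (rule sigma_nonneg[OF H a])
  moreover have "spectral_radius H \<ge> 0" using spec_rad_adj(2)[OF G a] unfolding H_def .
  ultimately show ?thesis unfolding H_def using power2_eq_iff_nonneg by blast
qed

lemma smult_mat_vec: "v \<in> carrier_vec (dim_col A) \<Longrightarrow> (c \<cdot>\<^sub>m (A :: complex mat)) *\<^sub>v v = c \<cdot>\<^sub>v (A *\<^sub>v v)"
  by (intro eq_vecI) (auto simp: scalar_prod_def sum_distrib_left mult.assoc)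

lemma pow_mat_add: "(A :: 'a :: semiring_1 mat) \<in> carrier_mat a a \<Longrightarrow> A ^\<^sub>m (s + t) = A ^\<^sub>m s * A ^\<^sub>m t"
proof (induction t)
  case 0 then show ?case by (simp add: right_mult_one_mat[of _ a a])
next
  case (Suc t)
  have "A ^\<^sub>m (s + Suc t) = (A ^\<^sub>m s * A ^\<^sub>m t) * A" using Suc by simp
  also have "\<dots> = A ^\<^sub>m s * (A ^\<^sub>m t * A)"
    by (rule assoc_mult_mat[of _ a a _ a _ a]) (use Suc.prems in auto)
  finally show ?case by simp
qed

lemma pow_mat_one: "(A :: 'a :: semiring_1 mat) \<in> carrier_mat a a \<Longrightarrow> A ^\<^sub>m 1 = A"
  by (simp add: left_mult_one_mat[of _ a a])

lemma pow_mat_comm: "(A :: 'a :: semiring_1 mat) \<in> carrier_mat a a \<Longrightarrow> A * A ^\<^sub>m t = A ^\<^sub>m t * A"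
  using pow_mat_add[of A a 1 t] pow_mat_add[of A a t 1] pow_mat_one[of A a] by (simp add: add.commute)

lemma pow_adj_herm:
  fixes A :: "complex mat"
  assumes A: "A \<in> carrier_mat a a" and h: "mat_adjoint A = A"
  shows "mat_adjoint (A ^\<^sub>m t) = A ^\<^sub>m t"
proof (induction t)
  case 0 then show ?case using A by simp
next
  case (Suc t)
  have "mat_adjoint (A ^\<^sub>m Suc t) = mat_adjoint A * mat_adjoint (A ^\<^sub>m t)"
    using adj_mult[of "A ^\<^sub>m t" a a A a] A by simp
  also have "\<dots> = A * A ^\<^sub>m t" using Suc h by simp
  also have "\<dots> = A ^\<^sub>m Suc t" using pow_mat_comm[OF A] by simp
  finally show ?case .
qed

lemma bound_qf:
  fixes M :: "complex mat"
  assumes M: "M \<in> carrier_mat a a" and nb: "norm_bound M C" and u: "u \<in> carrier_vec a"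
  shows "norm ((M *\<^sub>v u) \<bullet>c u) \<le> C * (\<Sum>i<a. cmod (u $ i))\<^sup>2"
proof -
  have "(M *\<^sub>v u) \<bullet>c u = (\<Sum>i<a. (\<Sum>j<a. M $$ (i,j) * u $ j) * cnj (u $ i))"
    using M u by (auto simp: scalar_prod_def atLeast0LessThan intro!: sum.cong)
  also have "norm \<dots> \<le> (\<Sum>i<a. norm ((\<Sum>j<a. M $$ (i,j) * u $ j) * cnj (u $ i)))"
    by (rule norm_sum)
  also have "\<dots> \<le> (\<Sum>i<a. (\<Sum>j<a. C * cmod (u $ j)) * cmod (u $ i))"
  proof (rule sum_mono)
    fix i assume i: "i \<in> {..<a}"
    have "norm (\<Sum>j<a. M $$ (i,j) * u $ j) \<le> (\<Sum>j<a. norm (M $$ (i,j) * u $ j))" by (rule norm_sum)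
    also have "\<dots> \<le> (\<Sum>j<a. C * cmod (u $ j))"
    proof (rule sum_mono)
      fix j assume j: "j \<in> {..<a}"
      have "norm (M $$ (i,j)) \<le> C" using nb i j M unfolding norm_bound_def by auto
      then show "norm (M $$ (i,j) * u $ j) \<le> C * cmod (u $ j)"
        by (simp add: norm_mult mult_right_mono)
    qed
    finally show "norm ((\<Sum>j<a. M $$ (i,j) * u $ j) * cnj (u $ i)) \<le> (\<Sum>j<a. C * cmod (u $ j)) * cmod (u $ i)"
      by (simp add: norm_mult mult_right_mono)
  qed
  also have "\<dots> = C * (\<Sum>i<a. cmod (u $ i))\<^sup>2"
    by (simp add: power2_eq_square sum_distrib_left sum_distrib_right mult.assoc)
  finally show ?thesis .
qed

lemma vec_quad_ineq:
  fixes y u :: "complex vec"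
  assumes y: "y \<in> carrier_vec a" and u: "u \<in> carrier_vec a"
  shows "Re (y \<bullet>c y) - 2 * \<alpha> * Re (y \<bullet>c u) + \<alpha>\<^sup>2 * Re (u \<bullet>c u) \<ge> 0"
proof -
  have "Re (y \<bullet>c y) - 2 * \<alpha> * Re (y \<bullet>c u) + \<alpha>\<^sup>2 * Re (u \<bullet>c u) =
    (\<Sum>i<a. (Re (y $ i) - \<alpha> * Re (u $ i))\<^sup>2 + (Im (y $ i) - \<alpha> * Im (u $ i))\<^sup>2)"
    using y u by (simp add: scalar_prod_def atLeast0LessThan Re_sum sum_distrib_left
        sum_subtractf sum.distrib power2_eq_square algebra_simps)
  also have "\<dots> \<ge> 0" by (intro sum_nonneg) simp
  finally show ?thesis .
qed

lemma rayleigh: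
  fixes H :: "complex mat"
  assumes H: "H \<in> carrier_mat a a" and aH: "mat_adjoint H = H" and a: "a > 0"
    and u: "u \<in> carrier_vec a"
  shows "Re ((H *\<^sub>v u) \<bullet>c u) \<le> spectral_radius H * Re (u \<bullet>c u)"
proof (rule ccontr)
  define q where "q = Re ((H *\<^sub>v u) \<bullet>c u)"
  define s where "s = Re (u \<bullet>c u)"
  define \<rho> where "\<rho> = spectral_radius H"
  assume "\<not> ?thesis"
  then have gt: "q > \<rho> * s" unfolding q_def s_def \<rho>_def by simp
  have s0: "s \<ge> 0" unfolding s_def using cnorm_props(2)[OF u] .
  have spos: "s > 0"
  proof (rule ccontr)
    assume "\<not> s > 0"
    then have "s = 0" using s0 by simp
    then have "u = 0\<^sub>v a" unfolding s_def using cnorm_props(4)[OF u] by simp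
    then have "q = 0" unfolding q_def using H by simp
    then show False using gt \<open>s = 0\<close> by simp
  qed
  have r0: "\<rho> \<ge> 0" unfolding \<rho>_def using spectral_radius_mem_max(1)[OF H a] by auto
  define Q where "Q = q / s"
  have qs: "Q > \<rho>" unfolding Q_def using gt spos by (simp add: field_simps)
  define c where "c = (\<rho> + Q) / 2"
  have c01: "c > 0" unfolding c_def using qs r0 by simp
  have c02: "c > \<rho>" unfolding c_def using qs r0 by simp
  have c03: "c < q / s" unfolding c_def Q_def[symmetric] using qs r0 by simp
  note c0 = c01 c02 c03
  define A where "A = complex_of_real (1 / c) \<cdot>\<^sub>m H"
  have A: "A \<in> carrier_mat a a" unfolding A_def using H by auto
  have aA: "mat_adjoint A = A" unfolding A_def adj_smult aH by simp
  have HA: "H = complex_of_real c \<cdot>\<^sub>m A" unfolding A_def using c0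
    by (intro eq_matI) (auto simp: of_real_divide)
  have rA: "spectral_radius A < 1"
  proof -
    obtain k where k: "k \<in> spectrum A" "spectral_radius A = norm k"
      using spectral_radius_mem_max(1)[OF A a] by auto
    obtain v where v: "v \<in> carrier_vec a" "v \<noteq> 0\<^sub>v a" "A *\<^sub>v v = k \<cdot>\<^sub>v v"
      using k(1) A unfolding spectrum_def eigenvalue_def eigenvector_def by auto
    have "H *\<^sub>v v = (complex_of_real c * k) \<cdot>\<^sub>v v"
      unfolding HA using v A by (simp add: smult_mat_vec smult_smult_assoc)
    then have "complex_of_real c * k \<in> spectrum H"
      unfolding spectrum_def eigenvalue_def eigenvector_def using v H by auto
    then have "norm (complex_of_real c * k) \<le> \<rho>"
      unfolding \<rho>_def using spectral_radius_mem_max(2)[OF H a] by auto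
    then have "c * norm k \<le> \<rho>" using c0 by (simp add: norm_mult)
    then have "c * norm k < c * 1" using c0 by linarith
    then have "norm k < 1" using c0 by (simp add: mult_less_cancel_left_pos)
    then show ?thesis using k by simp
  qed
  obtain C where C: "\<And>t. norm_bound (A ^\<^sub>m t) C"
    using spectral_radius_jnf_norm_bound_less_1_upper_triangular[OF A rA] by auto
  define U where "U = (\<Sum>i<a. cmod (u $ i))"
  define p where "p t = Re ((A ^\<^sub>m t *\<^sub>v u) \<bullet>c u) / s" for t
  have pb: "p t \<le> C * U\<^sup>2 / s" for t
  proof -
    have "Re ((A ^\<^sub>m t *\<^sub>v u) \<bullet>c u) \<le> norm ((A ^\<^sub>m t *\<^sub>v u) \<bullet>c u)" by (rule complex_Re_le_cmod)
    also have "\<dots> \<le> C * U\<^sup>2" unfolding U_def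
      by (rule bound_qf[OF pow_carrier_mat[OF A] C u])
    finally show ?thesis unfolding p_def using spos by (simp add: divide_right_mono)
  qed
  have p1: "p 1 > 1"
  proof -
    have "(A ^\<^sub>m 1 *\<^sub>v u) \<bullet>c u = complex_of_real (1 / c) * ((H *\<^sub>v u) \<bullet>c u)"
      unfolding pow_mat_one[OF A] A_def using H u by (simp add: smult_mat_vec)
    then have "p 1 = q / (c * s)" unfolding p_def q_def by simp
    moreover have "q > c * s" using c0 spos by (simp add: field_simps)
    ultimately show ?thesis using c0 spos by simp
  qed
  have prec: "p (2 * t) \<ge> (p t)\<^sup>2" for t
  proof -
    define y where "y = A ^\<^sub>m t *\<^sub>v u"
    have y: "y \<in> carrier_vec a" unfolding y_def using pow_carrier_mat[OF A] u by (rule mult_mat_vec_carrier)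
    have Ay: "A ^\<^sub>m t *\<^sub>v y \<in> carrier_vec a" using pow_carrier_mat[OF A] y by (rule mult_mat_vec_carrier)
    have "y \<bullet>c y = u \<bullet>c (mat_adjoint (A ^\<^sub>m t) *\<^sub>v y)"
      unfolding y_def by (rule adj_inner[OF pow_carrier_mat[OF A] u], simp add: y[unfolded y_def])
    also have "\<dots> = u \<bullet>c (A ^\<^sub>m (2 * t) *\<^sub>v u)"
      unfolding pow_adj_herm[OF A aA] y_def using pow_mat_add[OF A, of t t]
        assoc_mult_mat_vec[OF pow_carrier_mat[OF A] pow_carrier_mat[OF A] u, of t t]
      by (simp add: mult_2)
    also have "\<dots> = cnj ((A ^\<^sub>m (2 * t) *\<^sub>v u) \<bullet>c u)"
      using cinner_conj[OF mult_mat_vec_carrier[OF pow_carrier_mat[OF A] u] u] .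
    finally have yy: "Re (y \<bullet>c y) = p (2 * t) * s" unfolding p_def using spos by simp
    have yu: "Re (y \<bullet>c u) = p t * s" unfolding p_def y_def using spos by simp
    have "0 \<le> Re (y \<bullet>c y) - 2 * p t * Re (y \<bullet>c u) + (p t)\<^sup>2 * Re (u \<bullet>c u)"
      by (rule vec_quad_ineq[OF y u])
    then have "0 \<le> p (2 * t) * s - (p t)\<^sup>2 * s" unfolding yy yu s_def[symmetric]
      by (simp add: power2_eq_square algebra_simps)
    then have "0 \<le> (p (2 * t) - (p t)\<^sup>2) * s" by (simp add: algebra_simps)
    then show ?thesis using spos by (simp add: zero_le_mult_iff)
  qed
  have ppow: "p (2 ^ j) \<ge> (p 1) ^ (2 ^ j)" for j
  proof (induction j)
    case 0 then show ?case by simp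
  next
    case (Suc j)
    have "(p 1) ^ (2 ^ Suc j) = ((p 1) ^ (2 ^ j))\<^sup>2" by (simp add: power_mult[symmetric] mult.commute)
    also have "\<dots> \<le> (p (2 ^ j))\<^sup>2" using Suc p1 by (intro power_mono) auto
    also have "\<dots> \<le> p (2 * 2 ^ j)" by (rule prec)
    finally show ?case by simp
  qed
  obtain j where j: "C * U\<^sup>2 / s < (p 1) ^ j" using real_arch_pow[OF p1] by blast
  have "(p 1) ^ j \<le> (p 1) ^ (2 ^ j)" using p1 by (intro power_increasing) (auto intro: less_imp_le less_exp)
  also have "\<dots> \<le> p (2 ^ j)" by (rule ppow)
  also have "\<dots> \<le> C * U\<^sup>2 / s" by (rule pb)
  finally show False using j by simp
qed


lemma Dtau_index:
  assumes "n - 1 \<le> m" "i < n" "e < n - 1"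
  shows "D_tau n m src tgt $$ (i, e) = (if i = src e then 1 else if i = tgt e then -1 else 0)"
  using assms unfolding D_tau_def incidence_def by simp

lemma Dtau_carrier: "D_tau n m src tgt \<in> carrier_mat n (n - 1)"
  unfolding D_tau_def by simp

lemma Dtau_inj:
  assumes vg: "valid_graph n m src tgt" and nm: "n - 1 \<le> m"
    and st: "spanning_tree n src tgt {..<n - 1}"
    and x: "x \<in> carrier_vec (n - 1)" and D0: "D_tau n m src tgt *\<^sub>v x = 0\<^sub>v n"
  shows "x = 0\<^sub>v (n - 1)"
proof (intro eq_vecI)
  define N where "N = n - 1"
  fix l assume "l < dim_vec (0\<^sub>v (n - 1) :: real vec)"
  then have l: "l < N" unfolding N_def by simp
  have edges: "src e < n" "tgt e < n" "src e \<noteq> tgt e" if "e < N" for e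
    using vg that nm unfolding valid_graph_def N_def by auto
  define Rl where "Rl = (adj_in src tgt ({..<N} - {l}))\<^sup>*"
  define C where "C = {i. i < n \<and> (src l, i) \<in> Rl}"
  have Cfin: "finite C" unfolding C_def by simp
  have srcC: "src l \<in> C" unfolding C_def Rl_def using edges(1)[OF l] by simp
  have tgtC: "tgt l \<notin> C"
    using st l unfolding C_def Rl_def spanning_tree_def N_def by auto
  have closed: "src e \<in> C \<longleftrightarrow> tgt e \<in> C" if e: "e < N" "e \<noteq> l" for e
  proof -
    have "(src e, tgt e) \<in> adj_in src tgt ({..<N} - {l})" "(tgt e, src e) \<in> adj_in src tgt ({..<N} - {l})"
      unfolding adj_in_def using e by auto
    then show ?thesis unfolding C_def Rl_def using edges[OF e(1)]
      by (auto intro: rtrancl_into_rtrancl)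
  qed
  have Dx: "(D_tau n m src tgt *\<^sub>v x) $ i = (\<Sum>e<N. (if i = src e then 1 else if i = tgt e then -1 else 0) * x $ e)"
    if "i < n" for i
    using that x nm Dtau_carrier[of n m src tgt]
    by (auto simp: scalar_prod_def atLeast0LessThan Dtau_index N_def intro!: sum.cong)
  have inc: "(if i = src e then 1 else if i = tgt e then -1 else 0) =
      (if i = src e then 1 else 0) - (if i = tgt e then (1::real) else 0)" if "e < N" for i e
    using edges(3)[OF that] by auto
  have "0 = (\<Sum>i\<in>C. (D_tau n m src tgt *\<^sub>v x) $ i)"
    using D0 by (simp add: C_def)
  also have "\<dots> = (\<Sum>i\<in>C. \<Sum>e<N. ((if i = src e then 1 else 0) - (if i = tgt e then 1 else 0)) * x $ e)"
    by (intro sum.cong refl) (auto simp: Dx C_def inc)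
  also have "\<dots> = (\<Sum>e<N. \<Sum>i\<in>C. ((if i = src e then 1 else 0) - (if i = tgt e then 1 else 0)) * x $ e)"
    by (rule sum.swap)
  also have "\<dots> = (\<Sum>e<N. ((if src e \<in> C then 1 else 0) - (if tgt e \<in> C then 1 else 0)) * x $ e)"
    by (intro sum.cong refl) (simp add: sum_distrib_right[symmetric] sum_subtractf Cfin)
  also have "\<dots> = (\<Sum>e<N. if e = l then x $ e else 0)"
    by (intro sum.cong refl) (use closed srcC tgtC in auto)
  also have "\<dots> = x $ l" using l by simp
  finally show "x $ l = 0\<^sub>v (n - 1) $ l" using l N_def by simp
qed (use x in simp)


lemma hcat_carrier: "A \<in> carrier_mat r a \<Longrightarrow> B \<in> carrier_mat r b \<Longrightarrow> hcat A B \<in> carrier_mat r (a + b)"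
  unfolding hcat_def by auto

lemma hcat_mult_transpose:
  fixes A B :: "'a :: comm_ring_1 mat"
  assumes A: "A \<in> carrier_mat r a" and B: "B \<in> carrier_mat r b"
  shows "hcat A B * transpose_mat (hcat A B) = A * transpose_mat A + B * transpose_mat B"
proof (rule eq_matI)
  have d: "dim_row A = r" "dim_col A = a" "dim_row B = r" "dim_col B = b" using A B by auto
  fix i j assume "i < dim_row (A * transpose_mat A + B * transpose_mat B)"
    "j < dim_col (A * transpose_mat A + B * transpose_mat B)"
  then have i: "i < r" and j: "j < r" using d by auto
  let ?H = "hcat A B"
  have "(?H * transpose_mat ?H) $$ (i, j) = (\<Sum>k\<in>{0..<a+b}. ?H $$ (i,k) * ?H $$ (j,k))"
    using i j d unfolding hcat_def by (simp add: scalar_prod_def)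
  also have "\<dots> = (\<Sum>k\<in>{0..<a}. ?H $$ (i,k) * ?H $$ (j,k)) + (\<Sum>k\<in>{a..<a+b}. ?H $$ (i,k) * ?H $$ (j,k))"
    by (rule sum.atLeastLessThan_concat[symmetric]) auto
  also have "(\<Sum>k\<in>{0..<a}. ?H $$ (i,k) * ?H $$ (j,k)) = (\<Sum>k\<in>{0..<a}. A $$ (i,k) * A $$ (j,k))"
    using i j d unfolding hcat_def by (intro sum.cong) auto
  also have "(\<Sum>k\<in>{a..<a+b}. ?H $$ (i,k) * ?H $$ (j,k)) = (\<Sum>k\<in>{0..<b}. ?H $$ (i,k+a) * ?H $$ (j,k+a))"
    using sum.shift_bounds_nat_ivl[of "\<lambda>k. ?H $$ (i,k) * ?H $$ (j,k)" 0 a b] by (simp add: add.commute)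
  also have "\<dots> = (\<Sum>k\<in>{0..<b}. B $$ (i,k) * B $$ (j,k))"
    using i j d unfolding hcat_def by (intro sum.cong) auto
  finally show "(?H * transpose_mat ?H) $$ (i, j) = (A * transpose_mat A + B * transpose_mat B) $$ (i, j)"
    using i j d by (simp add: scalar_prod_def)
qed (use A B in \<open>auto simp: hcat_def\<close>)

lemma diag_mult_vec: assumes y: "y \<in> carrier_vec n" and i: "i < n"
  shows "(mat_diag n f *\<^sub>v y) $ i = f i * y $ i"
proof -
  have "(mat_diag n f *\<^sub>v y) $ i = (\<Sum>j\<in>{0..<n}. (if i = j then f j else 0) * y $ j)"
    using y i unfolding mat_diag_def by (simp add: scalar_prod_def)
  also have "\<dots> = (\<Sum>j\<in>{0..<n}. if j = i then f j * y $ j else 0)"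
    by (intro sum.cong) auto
  also have "\<dots> = f i * y $ i" using i by simp
  finally show ?thesis .
qed

lemma map_vec_zero: "f 0 = 0 \<Longrightarrow> map_vec f (0\<^sub>v n) = 0\<^sub>v n"
  by (auto simp: vec_eq_iff)

lemma diag_transpose: "transpose_mat (mat_diag n f) = mat_diag n f"
  unfolding mat_diag_def by (intro eq_matI) auto

lemma diag_eq: "(\<And>i. i < n \<Longrightarrow> f i = g i) \<Longrightarrow> mat_diag n f = mat_diag n g"
  unfolding mat_diag_def by (intro eq_matI) auto

definition cinj :: "real mat \<Rightarrow> bool" where
  "cinj A \<longleftrightarrow> (\<forall>v. v \<in> carrier_vec (dim_col A) \<longrightarrow> cmat A *\<^sub>v v = 0\<^sub>v (dim_row A) \<longrightarrow> v = 0\<^sub>v (dim_col A))"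

lemma cmat_mult_vec_Re:
  assumes A: "A \<in> carrier_mat a b" and v: "v \<in> carrier_vec b"
  shows "map_vec Re (cmat A *\<^sub>v v) = A *\<^sub>v map_vec Re v"
    "map_vec Im (cmat A *\<^sub>v v) = A *\<^sub>v map_vec Im v"
  using A v by (auto intro!: eq_vecI simp: cmat_def scalar_prod_def Re_sum Im_sum)

lemma cinj_of_inj:
  assumes A: "A \<in> carrier_mat a b"
    and inj: "\<And>x. x \<in> carrier_vec b \<Longrightarrow> A *\<^sub>v x = 0\<^sub>v a \<Longrightarrow> x = 0\<^sub>v b"
  shows "cinj A"
  unfolding cinj_def
proof (intro allI impI)
  fix v assume v: "v \<in> carrier_vec (dim_col A)" and z: "cmat A *\<^sub>v v = 0\<^sub>v (dim_row A)"
  have v': "v \<in> carrier_vec b" using v A by auto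
  have "A *\<^sub>v map_vec Re v = 0\<^sub>v a" using cmat_mult_vec_Re(1)[OF A v'] z map_vec_zero[of Re a] carrier_matD[OF A] by simp
  then have re: "map_vec Re v = 0\<^sub>v b" using inj v' by auto
  have "A *\<^sub>v map_vec Im v = 0\<^sub>v a" using cmat_mult_vec_Re(2)[OF A v'] z map_vec_zero[of Im a] carrier_matD[OF A] by simp
  then have im: "map_vec Im v = 0\<^sub>v b" using inj v' by auto
  show "v = 0\<^sub>v (dim_col A)"
  proof (intro eq_vecI)
    fix i assume "i < dim_vec (0\<^sub>v (dim_col A) :: complex vec)"
    then have i: "i < b" using A by auto
    have "Re (v $ i) = 0" "Im (v $ i) = 0"
      using arg_cong[OF re, of "\<lambda>x. x $ i"] arg_cong[OF im, of "\<lambda>x. x $ i"] i v' by auto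
    then show "v $ i = 0\<^sub>v (dim_col A) $ i" using i A by (simp add: complex_eq_iff)
  qed (use v in auto)
qed

lemma cinjD: "cinj A \<Longrightarrow> A \<in> carrier_mat a b \<Longrightarrow> v \<in> carrier_vec b \<Longrightarrow> cmat A *\<^sub>v v = 0\<^sub>v a \<Longrightarrow> v = 0\<^sub>v b"
  unfolding cinj_def by auto

lemma cmat_vec_of_real:
  assumes A: "A \<in> carrier_mat a b" and x: "x \<in> carrier_vec b"
  shows "cmat A *\<^sub>v map_vec complex_of_real x = map_vec complex_of_real (A *\<^sub>v x)"
  using A x by (auto intro!: eq_vecI simp: cmat_def scalar_prod_def)

lemma inj_of_cinj:
  assumes c: "cinj A" and A: "A \<in> carrier_mat a b" and x: "x \<in> carrier_vec b" and z: "A *\<^sub>v x = 0\<^sub>v a"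
  shows "x = 0\<^sub>v b"
proof -
  have z1: "cmat A *\<^sub>v map_vec complex_of_real x = 0\<^sub>v a"
    unfolding cmat_vec_of_real[OF A x] z by (rule map_vec_zero) simp
  have xc: "map_vec complex_of_real x \<in> carrier_vec b" using x by simp
  have z2: "map_vec complex_of_real x = 0\<^sub>v b" by (rule cinjD[OF c A xc z1])
  show ?thesis
  proof (intro eq_vecI)
    fix i assume "i < dim_vec (0\<^sub>v b :: real vec)"
    then have i: "i < b" by simp
    have "complex_of_real (x $ i) = 0" using arg_cong[OF z2, of "\<lambda>v. v $ i"] i x by auto
    then show "x $ i = 0\<^sub>v b $ i" using i by simp
  qed (use x in auto)
qed

lemma cinj_mult:
  assumes "cinj A" "cinj B" "A \<in> carrier_mat a k" "B \<in> carrier_mat k b"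
  shows "cinj (A * B)"
  unfolding cinj_def
proof (intro allI impI)
  fix v assume v: "v \<in> carrier_vec (dim_col (A * B))" and z: "cmat (A * B) *\<^sub>v v = 0\<^sub>v (dim_row (A * B))"
  have v': "v \<in> carrier_vec b" using v assms by auto
  have "cmat A *\<^sub>v (cmat B *\<^sub>v v) = 0\<^sub>v a"
    using z assms v' cmat_mult[OF assms(3,4)] by auto
  then have "cmat B *\<^sub>v v = 0\<^sub>v k" using cinjD[OF assms(1,3)] assms v' by auto
  then have "v = 0\<^sub>v b" using cinjD[OF assms(2,4)] v' by auto
  then show "v = 0\<^sub>v (dim_col (A * B))" using assms by auto
qed

lemma gram_qf:
  assumes F: "F \<in> carrier_mat a b" and v: "v \<in> carrier_vec b"
  shows "(cmat (transpose_mat F * F) *\<^sub>v v) \<bullet>c v = (cmat F *\<^sub>v v) \<bullet>c (cmat F *\<^sub>v v)"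
proof -
  have Ft: "cmat (transpose_mat F) \<in> carrier_mat b a" using F by simp
  have Fc: "cmat F \<in> carrier_mat a b" using F by simp
  have "cmat (transpose_mat F * F) *\<^sub>v v = cmat (transpose_mat F) *\<^sub>v (cmat F *\<^sub>v v)"
    using cmat_mult[of "transpose_mat F" b a F b] F v Ft Fc by simp
  also have "\<dots> \<bullet>c v = (cmat F *\<^sub>v v) \<bullet>c (mat_adjoint (cmat (transpose_mat F)) *\<^sub>v v)"
    by (rule adj_inner[OF Ft _ v]) (use Fc v in auto)
  also have "mat_adjoint (cmat (transpose_mat F)) = cmat F" by (simp add: adj_cmat)
  finally show ?thesis .
qed

lemma cinj_gram:
  assumes F: "F \<in> carrier_mat a b" and c: "cinj F"
  shows "cinj (transpose_mat F * F)"
  unfolding cinj_def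
proof (intro allI impI)
  fix v assume v: "v \<in> carrier_vec (dim_col (transpose_mat F * F))"
    and z: "cmat (transpose_mat F * F) *\<^sub>v v = 0\<^sub>v (dim_row (transpose_mat F * F))"
  have v': "v \<in> carrier_vec b" using v F by auto
  have "(cmat F *\<^sub>v v) \<bullet>c (cmat F *\<^sub>v v) = 0"
    using gram_qf[OF F v'] z F v' by simp
  then have "cmat F *\<^sub>v v = 0\<^sub>v a" using conjugate_square_eq_0_vec[of "cmat F *\<^sub>v v" a] F v' by simp
  then show "v = 0\<^sub>v (dim_col (transpose_mat F * F))" using cinjD[OF c F v'] F by simp
qed


lemma massoc: "dim_col A = dim_row B \<Longrightarrow> dim_col B = dim_row C \<Longrightarrow> A * B * C = A * (B * (C :: 'a :: semiring_0 mat))"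
  by (rule assoc_mult_mat[of A "dim_row A" "dim_col A" B "dim_col B" C "dim_col C"]) auto

lemma mtrans: "dim_col A = dim_row B \<Longrightarrow> transpose_mat (A * B) = transpose_mat B * transpose_mat (A :: 'a :: comm_semiring_0 mat)"
  by (rule transpose_mult[of A "dim_row A" "dim_col A" B "dim_col B"]) auto

lemma msmult_l: "dim_col A = dim_row B \<Longrightarrow> (c \<cdot>\<^sub>m A) * B = c \<cdot>\<^sub>m (A * (B :: 'a :: comm_semiring_0 mat))"
  by (rule mult_smult_assoc_mat[of A "dim_row A" "dim_col A" B "dim_col B"]) auto

lemma msmult_r: "dim_col A = dim_row B \<Longrightarrow> A * (c \<cdot>\<^sub>m B) = c \<cdot>\<^sub>m (A * (B :: 'a :: comm_semiring_0 mat))"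
  by (rule mult_smult_distrib[of A "dim_row A" "dim_col A" B "dim_col B"]) auto

lemma mdist_r: "dim_col A = dim_row B \<Longrightarrow> dim_row B = dim_row C \<Longrightarrow> dim_col B = dim_col C \<Longrightarrow>
  A * (B + C) = A * B + A * (C :: 'a :: semiring_0 mat)"
  by (rule mult_add_distrib_mat[of A "dim_row A" "dim_col A" B "dim_col B"]) auto

lemma mdist_l: "dim_row A = dim_row B \<Longrightarrow> dim_col A = dim_col B \<Longrightarrow> dim_col A = dim_row C \<Longrightarrow>
  (A + B) * C = A * C + B * (C :: 'a :: semiring_0 mat)"
  by (rule add_mult_distrib_mat[of A "dim_row A" "dim_col A" B C "dim_col C"]) auto

lemma one_l: "dim_row A = k \<Longrightarrow> 1\<^sub>m k * (A :: 'a :: semiring_1 mat) = A" by simp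
lemma one_r: "dim_col A = k \<Longrightarrow> (A :: 'a :: semiring_1 mat) * 1\<^sub>m k = A" by simp

lemma inv_cancel_l: "A * B = 1\<^sub>m k \<Longrightarrow> dim_col B = dim_row C \<Longrightarrow> dim_col A = dim_row B \<Longrightarrow> dim_row C = k \<Longrightarrow>
  A * (B * C) = (C :: 'a :: semiring_1 mat)"
  by (subst massoc[symmetric]) auto

lemmas msimps = massoc msmult_l msmult_r mdist_r mdist_l

lemma transpose_c_intro: "A \<in> carrier_mat b a \<Longrightarrow> transpose_mat A \<in> carrier_mat a b" by simp

lemmas cc_intros = mult_carrier_mat add_carrier_mat smult_carrier_mat transpose_c_intro minv_carrier
  one_carrier_mat mat_diag_dim

lemma transpose_smult: "transpose_mat (c \<cdot>\<^sub>m A) = c \<cdot>\<^sub>m transpose_mat A"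
  by (intro eq_matI) auto

locale ctx =
  fixes n m :: nat and src tgt :: "nat \<Rightarrow> nat" and w eps :: "nat \<Rightarrow> real"
    and sw sv :: real
  assumes n2: "n \<ge> 2"
    and vg: "valid_graph n m src tgt"
    and nm: "n - 1 \<le> m"
    and st: "spanning_tree n src tgt {..<n - 1}"
    and wpos: "\<forall>l<m. w l > 0"
    and epos: "\<forall>i<n. eps i > 0"
begin

definition "N = n - 1"
definition "Dt = D_tau n m src tgt"
definition "Rm = R_mat n m src tgt"
definition "W = mat_diag m w"
definition "Lm = L_es n m src tgt eps"
definition "Es = mat_diag n (\<lambda>i. 1 / sqrt (eps i))"
definition "Ws = mat_diag m (\<lambda>l. sqrt (w l))"
definition "FL = Es * Dt"
definition "FM = Ws * transpose_mat Rm"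
definition "M = Rm * W * transpose_mat Rm"
definition "S = Lm * M"
definition "K = M * Lm * M"
definition "B1 = sw \<cdot>\<^sub>m (transpose_mat Dt * Es)"
definition "B2 = (- sv) \<cdot>\<^sub>m (Lm * Rm * Ws)"
definition "Bm = hcat B1 B2"
definition "Cm = Bm * transpose_mat Bm"
definition "Y = minv S * Bm"
definition "X = Y * transpose_mat Y"
definition "X' = (sw\<^sup>2) \<cdot>\<^sub>m minv K + (sv\<^sup>2) \<cdot>\<^sub>m minv M"

lemma N1: "N \<ge> 1" "N \<le> m" unfolding N_def using n2 nm by auto

lemma Dt_c[simp,intro]: "Dt \<in> carrier_mat n N" unfolding Dt_def N_def by (rule Dtau_carrier)
lemma W_c[simp,intro]: "W \<in> carrier_mat m m" unfolding W_def by simp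
lemma Ws_c[simp,intro]: "Ws \<in> carrier_mat m m" unfolding Ws_def by simp
lemma Es_c[simp,intro]: "Es \<in> carrier_mat n n" unfolding Es_def by simp

lemma Rm_c[simp,intro]: "Rm \<in> carrier_mat N m"
proof -
  have Dc: "D_c n m src tgt \<in> carrier_mat n (m - N)" unfolding D_c_def N_def by simp
  have "minv (transpose_mat Dt * Dt) \<in> carrier_mat N N" by (blast intro: cc_intros Dt_c)
  then have "T_tau_c n m src tgt \<in> carrier_mat N (m - N)"
    unfolding T_tau_c_def Dt_def[symmetric] using Dc by (blast intro: cc_intros Dt_c)
  then have "Rm \<in> carrier_mat N (N + (m - N))"
    unfolding Rm_def R_mat_def N_def[symmetric] by (intro hcat_carrier) auto
  then show ?thesis using N1 by simp
qed

lemma Lm_c[simp,intro]: "Lm \<in> carrier_mat N N" unfolding Lm_def L_es_def Dt_def[symmetric] by (blast intro: cc_intros)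
lemma FL_c[simp,intro]: "FL \<in> carrier_mat n N" unfolding FL_def by (blast intro: cc_intros)
lemma FM_c[simp,intro]: "FM \<in> carrier_mat m N" unfolding FM_def by (blast intro: cc_intros)
lemma M_c[simp,intro]: "M \<in> carrier_mat N N" unfolding M_def by (blast intro: cc_intros)
lemma S_c[simp,intro]: "S \<in> carrier_mat N N" unfolding S_def by (blast intro: cc_intros)
lemma K_c[simp,intro]: "K \<in> carrier_mat N N" unfolding K_def by (blast intro: cc_intros)
lemma B1_c[simp,intro]: "B1 \<in> carrier_mat N n" unfolding B1_def by (blast intro: cc_intros)
lemma B2_c[simp,intro]: "B2 \<in> carrier_mat N m" unfolding B2_def by (blast intro: cc_intros)
lemma Bm_c[simp,intro]: "Bm \<in> carrier_mat N (n + m)" unfolding Bm_def by (rule hcat_carrier) simp_all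


lemma dims[simp]:
  "dim_row Dt = n" "dim_col Dt = N" "dim_row W = m" "dim_col W = m" "dim_row Ws = m" "dim_col Ws = m"
  "dim_row Es = n" "dim_col Es = n" "dim_row Rm = N" "dim_col Rm = m" "dim_row Lm = N" "dim_col Lm = N"
  "dim_row FL = n" "dim_col FL = N" "dim_row FM = m" "dim_col FM = N" "dim_row M = N" "dim_col M = N"
  "dim_row S = N" "dim_col S = N" "dim_row K = N" "dim_col K = N" "dim_row B1 = N" "dim_col B1 = n"
  "dim_row B2 = N" "dim_col B2 = m" "dim_row Bm = N" "dim_col Bm = n + m"
  using carrier_matD[OF Dt_c] carrier_matD[OF W_c] carrier_matD[OF Ws_c] carrier_matD[OF Es_c] carrier_matD[OF Rm_c] carrier_matD[OF Lm_c] carrier_matD[OF FL_c] carrier_matD[OF FM_c] carrier_matD[OF M_c] carrier_matD[OF S_c] carrier_matD[OF K_c] carrier_matD[OF B1_c] carrier_matD[OF B2_c] carrier_matD[OF Bm_c] by simp_all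

lemma Lm_gram: "Lm = transpose_mat FL * FL"
proof -
  have EE: "Es * Es = mat_diag n (\<lambda>i. 1 / eps i)"
    unfolding Es_def mat_diag_diag using epos
    by (intro diag_eq) (use epos in \<open>auto simp: real_sqrt_mult[symmetric]\<close>)
  have EsT: "transpose_mat Es = Es" unfolding Es_def by (rule diag_transpose)
  have "transpose_mat FL * FL = transpose_mat Dt * Es * (Es * Dt)"
    unfolding FL_def using transpose_mult[of Es n n Dt N] EsT by simp
  also have "\<dots> = transpose_mat Dt * (Es * Es) * Dt" by (simp add: massoc)
  finally show ?thesis unfolding EE Lm_def L_es_def Dt_def by simp
qed


lemma EsT: "transpose_mat Es = Es" unfolding Es_def by (rule diag_transpose)
lemma WsT: "transpose_mat Ws = Ws" unfolding Ws_def by (rule diag_transpose)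

lemma M_gram: "M = transpose_mat FM * FM"
proof -
  have WW: "Ws * Ws = W"
    unfolding Ws_def W_def mat_diag_diag
    by (intro diag_eq) (use wpos in \<open>auto simp: real_sqrt_mult[symmetric]\<close>)
  have "transpose_mat FM * FM = Rm * (Ws * (Ws * transpose_mat Rm))"
    unfolding FM_def by (simp add: mtrans WsT msimps)
  also have "\<dots> = Rm * ((Ws * Ws) * transpose_mat Rm)" by (simp add: msimps)
  finally show ?thesis unfolding WW M_def by (simp add: msimps)
qed

lemma Lm_sym: "transpose_mat Lm = Lm" unfolding Lm_gram by (simp add: mtrans)
lemma M_sym: "transpose_mat M = M" unfolding M_gram by (simp add: mtrans)

lemma RT_index: assumes x: "x \<in> carrier_vec N" and l: "l < N"
  shows "(transpose_mat Rm *\<^sub>v x) $ l = x $ l"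
proof -
  have Rl: "Rm $$ (i, l) = (if i = l then 1 else 0)" if "i < N" for i
    using that l N1 unfolding Rm_def R_mat_def hcat_def N_def[symmetric] by simp
  have "(transpose_mat Rm *\<^sub>v x) $ l = (\<Sum>i\<in>{0..<N}. Rm $$ (i, l) * x $ i)"
    using x l N1 by (simp add: scalar_prod_def)
  also have "\<dots> = (\<Sum>i\<in>{0..<N}. if i = l then x $ i else 0)"
    by (intro sum.cong) (auto simp: Rl)
  also have "\<dots> = x $ l" using l by simp
  finally show ?thesis .
qed

lemma cinj_FL: "cinj FL"
proof (rule cinj_of_inj[OF FL_c])
  fix x :: "real vec" assume x: "x \<in> carrier_vec N" and z: "FL *\<^sub>v x = 0\<^sub>v n"
  have Dx: "Dt *\<^sub>v x \<in> carrier_vec n" by (rule mult_mat_vec_carrier[OF Dt_c x])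
  have "Es *\<^sub>v (Dt *\<^sub>v x) = 0\<^sub>v n" using z assoc_mult_mat_vec[OF Es_c Dt_c x] unfolding FL_def by simp
  then have "Dt *\<^sub>v x = 0\<^sub>v n"
  proof (intro eq_vecI)
    fix i assume i: "i < dim_vec (0\<^sub>v n :: real vec)" and h: "Es *\<^sub>v (Dt *\<^sub>v x) = 0\<^sub>v n"
    have i': "i < n" using i by simp
    have e1: "(Es *\<^sub>v (Dt *\<^sub>v x)) $ i = 0" using h i' by simp
    have e2: "(Es *\<^sub>v (Dt *\<^sub>v x)) $ i = (1 / sqrt (eps i)) * (Dt *\<^sub>v x) $ i"
      unfolding Es_def by (rule diag_mult_vec[OF Dx i'])
    have "(1 / sqrt (eps i)) * (Dt *\<^sub>v x) $ i = 0" using e1 e2 by simp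
    moreover have "eps i > 0" using epos i by simp
    ultimately show "(Dt *\<^sub>v x) $ i = 0\<^sub>v n $ i" using i by simp
  qed (use Dx in simp)
  then show "x = 0\<^sub>v N" using Dtau_inj[OF vg nm st, of x] x unfolding Dt_def N_def by simp
qed

lemma cinj_FM: "cinj FM"
proof (rule cinj_of_inj[OF FM_c])
  fix x :: "real vec" assume x: "x \<in> carrier_vec N" and z: "FM *\<^sub>v x = 0\<^sub>v m"
  have Rx: "transpose_mat Rm *\<^sub>v x \<in> carrier_vec m" by (rule mult_mat_vec_carrier[OF transpose_c_intro[OF Rm_c] x])
  have h: "Ws *\<^sub>v (transpose_mat Rm *\<^sub>v x) = 0\<^sub>v m"
    using z assoc_mult_mat_vec[OF Ws_c transpose_c_intro[OF Rm_c] x] unfolding FM_def by simp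
  show "x = 0\<^sub>v N"
  proof (intro eq_vecI)
    fix l assume l: "l < dim_vec (0\<^sub>v N :: real vec)"
    then have lN: "l < N" by simp
    then have lm: "l < m" using N1 by simp
    have e1: "(Ws *\<^sub>v (transpose_mat Rm *\<^sub>v x)) $ l = 0" using h lm by simp
    have e2: "(Ws *\<^sub>v (transpose_mat Rm *\<^sub>v x)) $ l = sqrt (w l) * (transpose_mat Rm *\<^sub>v x) $ l"
      unfolding Ws_def by (rule diag_mult_vec[OF Rx lm])
    have "sqrt (w l) * (transpose_mat Rm *\<^sub>v x) $ l = 0" using e1 e2 by simp
    moreover have "w l > 0" using wpos lm by simp
    ultimately show "x $ l = 0\<^sub>v N $ l" using RT_index[OF x lN] lN by simp
  qed (use x in simp)
qed

lemma cinj_Lm: "cinj Lm" unfolding Lm_gram by (rule cinj_gram[OF FL_c cinj_FL])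
lemma cinj_M: "cinj M" unfolding M_gram by (rule cinj_gram[OF FM_c cinj_FM])
lemma cinj_S: "cinj S" unfolding S_def by (rule cinj_mult[OF cinj_Lm cinj_M Lm_c M_c])
lemma cinj_K: "cinj K" unfolding K_def
  by (rule cinj_mult[OF cinj_mult[OF cinj_M cinj_Lm M_c Lm_c] cinj_M]) auto

lemma inv_of_cinj:
  assumes c: "cinj A" and A: "A \<in> carrier_mat N N"
  shows "minv A \<in> carrier_mat N N" "A * minv A = 1\<^sub>m N" "minv A * A = 1\<^sub>m N"
  using minv_props[OF A inj_of_cinj[OF c A]] by auto

lemmas S_inv = inv_of_cinj[OF cinj_S S_c]
lemmas M_inv = inv_of_cinj[OF cinj_M M_c]
lemmas K_inv = inv_of_cinj[OF cinj_K K_c]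

lemma inv_dims[simp]: "dim_row (minv S) = N" "dim_col (minv S) = N" "dim_row (minv M) = N" "dim_col (minv M) = N"
  "dim_row (minv K) = N" "dim_col (minv K) = N"
  using carrier_matD[OF S_inv(1)] carrier_matD[OF M_inv(1)] carrier_matD[OF K_inv(1)] by simp_all

end


lemma smult_smult_m: "a \<cdot>\<^sub>m (b \<cdot>\<^sub>m A) = (a * b :: 'a :: semigroup_mult) \<cdot>\<^sub>m A"
  by (intro eq_matI) (auto simp: mult.assoc)

context ctx begin

lemma Y_c[simp, intro]: "Y \<in> carrier_mat N (n + m)" unfolding Y_def by (blast intro: cc_intros)
lemma X_c[simp, intro]: "X \<in> carrier_mat N N" unfolding X_def by (blast intro: cc_intros)
lemma X'_c[simp, intro]: "X' \<in> carrier_mat N N" unfolding X'_def by (blast intro: cc_intros)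
lemma dims2[simp]: "dim_row Y = N" "dim_col Y = n + m" "dim_row X = N" "dim_col X = N"
  "dim_row X' = N" "dim_col X' = N"
  using carrier_matD[OF Y_c] carrier_matD[OF X_c] carrier_matD[OF X'_c] by simp_all

lemma SY: "S * Y = Bm"
  unfolding Y_def by (rule inv_cancel_l[OF S_inv(2)]) simp_all

lemma ST: "transpose_mat S = M * Lm"
  unfolding S_def by (simp add: mtrans Lm_sym M_sym)

lemma SXS: "S * (X * transpose_mat S) = Cm"
proof -
  have "Cm = (S * Y) * transpose_mat (S * Y)" unfolding Cm_def SY ..
  also have "\<dots> = S * (Y * (transpose_mat Y * transpose_mat S))" by (simp add: mtrans msimps)
  also have "\<dots> = S * (X * transpose_mat S)" unfolding X_def by (simp add: msimps)
  finally show ?thesis by simp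
qed

lemma Cm_formula: "Cm = sw\<^sup>2 \<cdot>\<^sub>m Lm + sv\<^sup>2 \<cdot>\<^sub>m (Lm * (M * Lm))"
proof -
  have "Cm = B1 * transpose_mat B1 + B2 * transpose_mat B2"
    unfolding Cm_def Bm_def by (rule hcat_mult_transpose[OF B1_c B2_c])
  also have "B1 * transpose_mat B1 = sw\<^sup>2 \<cdot>\<^sub>m Lm"
  proof -
    have "B1 * transpose_mat B1 = (sw * sw) \<cdot>\<^sub>m (transpose_mat Dt * (Es * (Es * Dt)))"
      unfolding B1_def by (simp add: transpose_smult mtrans EsT msimps smult_smult_m)
    also have "transpose_mat Dt * (Es * (Es * Dt)) = Lm"
      unfolding Lm_gram FL_def by (simp add: mtrans EsT msimps)
    finally show ?thesis by (simp add: power2_eq_square)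
  qed
  also have "B2 * transpose_mat B2 = sv\<^sup>2 \<cdot>\<^sub>m (Lm * (M * Lm))"
  proof -
    have "B2 * transpose_mat B2 = (sv * sv) \<cdot>\<^sub>m (Lm * (Rm * (Ws * (Ws * (transpose_mat Rm * Lm)))))"
      unfolding B2_def by (simp add: transpose_smult mtrans WsT Lm_sym msimps smult_smult_m)
    also have "Lm * (Rm * (Ws * (Ws * (transpose_mat Rm * Lm)))) = Lm * (M * Lm)"
      unfolding M_gram FM_def by (simp add: mtrans WsT msimps)
    finally show ?thesis by (simp add: power2_eq_square)
  qed
  finally show ?thesis .
qed

lemma K_mult_l: "dim_row Z = N \<Longrightarrow> K * Z = M * (Lm * (M * Z))"
  unfolding K_def by (simp add: msimps)
lemma K_mult_r: "dim_col Z = N \<Longrightarrow> Z * K = Z * (M * (Lm * M))"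
  unfolding K_def by (simp add: msimps)

lemma LMK: "Lm * (M * minv K) = minv M"
proof -
  have "M * (Lm * (M * minv K)) = 1\<^sub>m N" using K_inv(2) K_mult_l[of "minv K"] by simp
  then have "minv M * (M * (Lm * (M * minv K))) = minv M" by simp
  moreover have "minv M * (M * (Lm * (M * minv K))) = Lm * (M * minv K)"
    by (rule inv_cancel_l[OF M_inv(3)]) simp_all
  ultimately show ?thesis by simp
qed

lemma KML: "minv K * (M * Lm) = minv M"
proof -
  have h: "(minv K * (M * Lm)) * M = 1\<^sub>m N" using K_inv(3) K_mult_r[of "minv K"] by (simp add: msimps)
  have "minv K * (M * Lm) = (minv K * (M * Lm)) * (M * minv M)" using M_inv(2) by simp
  also have "\<dots> = ((minv K * (M * Lm)) * M) * minv M" by (simp add: msimps)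
  also have "\<dots> = minv M" unfolding h by simp
  finally show ?thesis .
qed

lemma SX'S: "S * (X' * transpose_mat S) = Cm"
proof -
  have a: "Lm * (M * (minv K * (M * Lm))) = Lm"
  proof -
    have "Lm * (M * (minv K * (M * Lm))) = (Lm * (M * minv K)) * (M * Lm)" by (simp add: msimps)
    also have "\<dots> = minv M * (M * Lm)" unfolding LMK ..
    also have "\<dots> = Lm" by (rule inv_cancel_l[OF M_inv(3)]) simp_all
    finally show ?thesis .
  qed
  have b: "Lm * (M * (minv M * (M * Lm))) = Lm * (M * Lm)"
    using inv_cancel_l[OF M_inv(2), of "M * Lm"] by simp
  show ?thesis unfolding ST unfolding X'_def S_def Cm_formula by (simp add: msimps a b)
qed

lemma cancel_S:
  assumes P: "P \<in> carrier_mat N N" and e: "S * (P * transpose_mat S) = Z"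
  shows "P = minv S * (Z * transpose_mat (minv S))"
proof -
  have t: "transpose_mat S * transpose_mat (minv S) = 1\<^sub>m N"
    using arg_cong[OF S_inv(3), of transpose_mat] by (simp add: mtrans)
  have "minv S * (Z * transpose_mat (minv S)) = minv S * (S * (P * (transpose_mat S * transpose_mat (minv S))))"
    unfolding e[symmetric] using carrier_matD[OF P] by (simp add: msimps)
  also have "\<dots> = P * (transpose_mat S * transpose_mat (minv S))"
    by (rule inv_cancel_l[OF S_inv(3)]) (use P in simp_all)
  also have "\<dots> = P" unfolding t using P by simp
  finally show ?thesis by simp
qed

lemma X_eq: "X = X'"
  using cancel_S[OF X_c SXS] cancel_S[OF X'_c SX'S] by simp

lemma SX_comm: "S * X = X * transpose_mat S"
proof -
  have "S * X' = sw\<^sup>2 \<cdot>\<^sub>m minv M + sv\<^sup>2 \<cdot>\<^sub>m Lm"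
    unfolding X'_def S_def by (simp add: msimps LMK M_inv(2))
  moreover have "X' * transpose_mat S = sw\<^sup>2 \<cdot>\<^sub>m minv M + sv\<^sup>2 \<cdot>\<^sub>m Lm"
    unfolding X'_def ST by (simp add: msimps KML inv_cancel_l[OF M_inv(3)])
  ultimately show ?thesis unfolding X_eq by simp
qed

lemma Z_eq: "Z_mat n m src tgt w eps sw sv = transpose_mat Rm * (X * Rm)"
proof -
  have "Z_mat n m src tgt w eps sw sv =
    sw\<^sup>2 \<cdot>\<^sub>m (transpose_mat Rm * minv K * Rm) + sv\<^sup>2 \<cdot>\<^sub>m (transpose_mat Rm * minv M * Rm)"
    unfolding Z_mat_def Let_def Rm_def[symmetric] Lm_def[symmetric] W_def[symmetric]
      M_def[symmetric] K_def[symmetric] ..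
  also have "\<dots> = transpose_mat Rm * (X * Rm)" unfolding X_eq X'_def by (simp add: msimps)
  finally show ?thesis .
qed

end


lemma expand:
  fixes A X A' :: "complex mat"
  assumes A: "A \<in> carrier_mat k k" and X: "X \<in> carrier_mat k k" and A': "A' \<in> carrier_mat k k"
    and c: "A * X = X * A'"
  shows "(s \<cdot>\<^sub>m 1\<^sub>m k + A) * X * ((- s) \<cdot>\<^sub>m 1\<^sub>m k + A') = (- (s * s)) \<cdot>\<^sub>m X + A * (X * A')"
proof -
  have d: "dim_row A = k" "dim_col A = k" "dim_row X = k" "dim_col X = k" "dim_row A' = k" "dim_col A' = k"
    using A X A' by auto
  have "(s \<cdot>\<^sub>m 1\<^sub>m k + A) * X * ((- s) \<cdot>\<^sub>m 1\<^sub>m k + A') =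
     (- s) \<cdot>\<^sub>m (s \<cdot>\<^sub>m X + X * A') + (s \<cdot>\<^sub>m (X * A') + X * (A' * A'))"
    using d c by (simp add: msimps)
  also have "\<dots> = (- (s * s)) \<cdot>\<^sub>m X + X * (A' * A')"
    using d by (intro eq_matI) (simp_all add: algebra_simps)
  also have "X * (A' * A') = A * (X * A')"
  proof -
    have "A * (X * A') = (A * X) * A'" using d by (simp add: msimps)
    also have "\<dots> = X * (A' * A')" unfolding c using d by (simp add: msimps)
    finally show ?thesis by simp
  qed
  finally show ?thesis .
qed

lemma cmat_dims: "dim_col A = dim_row B \<Longrightarrow> cmat (A * B) = cmat A * cmat B"
  by (rule cmat_mult[of A "dim_row A" "dim_col A" B "dim_col B"]) auto

lemma adj_dims: "dim_col A = dim_row B \<Longrightarrow> mat_adjoint (A * B) = mat_adjoint B * mat_adjoint (A :: complex mat)"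
  by (rule adj_mult[of A "dim_row A" "dim_col A" B "dim_col B"]) auto

context ctx begin

lemma Sigma_eq: "Sigma_tau n m src tgt w eps sw sv s =
  cmat (transpose_mat Rm) * minv (s \<cdot>\<^sub>m 1\<^sub>m N + cmat S) * cmat Bm"
proof -
  have "Lm * Rm * W * transpose_mat Rm = S" unfolding S_def M_def by (simp add: msimps)
  then show ?thesis
    unfolding Sigma_tau_def Let_def Rm_def[symmetric] Lm_def[symmetric] W_def[symmetric]
      Dt_def[symmetric] N_def[symmetric] Es_def[symmetric] Ws_def[symmetric] B1_def[symmetric]
      B2_def[symmetric] Bm_def[symmetric] by simp
qed

lemma Cm_c[simp, intro]: "Cm \<in> carrier_mat N N" unfolding Cm_def by (blast intro: cc_intros)

definition "Qm s = s \<cdot>\<^sub>m 1\<^sub>m N + cmat S"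

lemma Qm_c[simp, intro]: "Qm s \<in> carrier_mat N N" unfolding Qm_def by simp

lemma Q_inj:
  assumes v: "v \<in> carrier_vec N" and z: "Qm (\<i> * complex_of_real \<omega>) *\<^sub>v v = 0\<^sub>v N"
  shows "v = 0\<^sub>v N"
proof -
  define s where "s = \<i> * complex_of_real \<omega>"
  define y where "y = cmat M *\<^sub>v v"
  have y: "y \<in> carrier_vec N" unfolding y_def by (rule mult_mat_vec_carrier[OF _ v]) simp
  have Lv: "cmat Lm *\<^sub>v y \<in> carrier_vec N" by (rule mult_mat_vec_carrier[OF _ y]) simp
  have c1: "cmat Lm \<in> carrier_mat N N" "cmat M \<in> carrier_mat N N" by simp_all
  have "Qm s *\<^sub>v v = (s \<cdot>\<^sub>m 1\<^sub>m N) *\<^sub>v v + (cmat Lm * cmat M) *\<^sub>v v"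
    unfolding Qm_def S_def cmat_mult[OF Lm_c M_c]
    by (rule add_mult_distrib_mat_vec[of _ N N _ v]) (use v c1 in \<open>simp_all add: mult_carrier_mat[OF c1]\<close>)
  also have "(s \<cdot>\<^sub>m 1\<^sub>m N) *\<^sub>v v = s \<cdot>\<^sub>v v" using v by (simp add: smult_mat_vec)
  also have "(cmat Lm * cmat M) *\<^sub>v v = cmat Lm *\<^sub>v y"
    unfolding y_def by (rule assoc_mult_mat_vec[OF c1 v])
  finally have "Qm s *\<^sub>v v = s \<cdot>\<^sub>v v + cmat Lm *\<^sub>v y" .
  then have e: "s \<cdot>\<^sub>v v + cmat Lm *\<^sub>v y = 0\<^sub>v N" using z unfolding s_def by simp
  have e2: "cmat Lm *\<^sub>v y = (- s) \<cdot>\<^sub>v v"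
  proof (intro eq_vecI)
    fix i assume i: "i < dim_vec ((- s) \<cdot>\<^sub>v v)"
    then have i': "i < N" using v by simp
    have "(s \<cdot>\<^sub>v v + cmat Lm *\<^sub>v y) $ i = 0" using e i' by simp
    then have "s * v $ i + (cmat Lm *\<^sub>v y) $ i = 0" using i' v Lv by simp
    then show "(cmat Lm *\<^sub>v y) $ i = ((- s) \<cdot>\<^sub>v v) $ i" using i' v
      by (simp add: eq_neg_iff_add_eq_0 add.commute)
  qed (use Lv v in simp)
  have r1: "(cmat Lm *\<^sub>v y) \<bullet>c y = (cmat FL *\<^sub>v y) \<bullet>c (cmat FL *\<^sub>v y)"
    unfolding Lm_gram by (rule gram_qf[OF FL_c y])
  have r2: "(cmat M *\<^sub>v v) \<bullet>c v = (cmat FM *\<^sub>v v) \<bullet>c (cmat FM *\<^sub>v v)"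
    unfolding M_gram by (rule gram_qf[OF FM_c v])
  have FLy: "cmat FL *\<^sub>v y \<in> carrier_vec n" by (rule mult_mat_vec_carrier[OF _ y]) simp
  have FMv: "cmat FM *\<^sub>v v \<in> carrier_vec m" by (rule mult_mat_vec_carrier[OF _ v]) simp
  have "(cmat Lm *\<^sub>v y) \<bullet>c y = (- s) * (v \<bullet>c y)" unfolding e2 using v y by simp
  also have "v \<bullet>c y = cnj (y \<bullet>c v)" by (rule cinner_conj[OF y v])
  also have "y \<bullet>c v = complex_of_real (Re ((cmat FM *\<^sub>v v) \<bullet>c (cmat FM *\<^sub>v v)))"
    unfolding y_def r2 by (rule cnorm_props(3)[OF FMv])
  finally have "(cmat FL *\<^sub>v y) \<bullet>c (cmat FL *\<^sub>v y) = (- s) * complex_of_real (Re ((cmat FM *\<^sub>v v) \<bullet>c (cmat FM *\<^sub>v v)))"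
    unfolding r1 by simp
  then have "Re ((cmat FL *\<^sub>v y) \<bullet>c (cmat FL *\<^sub>v y)) = 0" unfolding s_def by simp
  then have "cmat FL *\<^sub>v y = 0\<^sub>v n" using cnorm_props(4)[OF FLy] by simp
  then have "y = 0\<^sub>v N" by (rule cinjD[OF cinj_FL FL_c y])
  then have "cmat M *\<^sub>v v = 0\<^sub>v N" unfolding y_def .
  then show "v = 0\<^sub>v N" by (rule cinjD[OF cinj_M M_c v])
qed


definition "Pm \<omega> = minv (Qm (\<i> * complex_of_real \<omega>))"

lemma P_props: "Pm \<omega> \<in> carrier_mat N N" "Qm (\<i> * complex_of_real \<omega>) * Pm \<omega> = 1\<^sub>m N"
  "Pm \<omega> * Qm (\<i> * complex_of_real \<omega>) = 1\<^sub>m N"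
  unfolding Pm_def using minv_props[OF Qm_c Q_inj] by auto

lemma P_dims[simp]: "dim_row (Pm \<omega>) = N" "dim_col (Pm \<omega>) = N"
  using carrier_matD[OF P_props(1)] by auto

lemma Q_dims[simp]: "dim_row (Qm s) = N" "dim_col (Qm s) = N"
  using carrier_matD[OF Qm_c] by auto

lemma adjQ: "mat_adjoint (Qm (\<i> * complex_of_real \<omega>)) = (- (\<i> * complex_of_real \<omega>)) \<cdot>\<^sub>m 1\<^sub>m N + cmat (transpose_mat S)"
  unfolding Qm_def by (subst adj_add[of _ N N]) (simp_all add: adj_smult adj_cmat)

lemma QXQ: "Qm (\<i> * complex_of_real \<omega>) * cmat X * mat_adjoint (Qm (\<i> * complex_of_real \<omega>)) =
   cmat Cm + complex_of_real (\<omega>\<^sup>2) \<cdot>\<^sub>m cmat X"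
proof -
  let ?s = "\<i> * complex_of_real \<omega>"
  have c: "cmat S * cmat X = cmat X * cmat (transpose_mat S)"
    using SX_comm by (simp add: cmat_dims[symmetric])
  have "Qm ?s * cmat X * mat_adjoint (Qm ?s) = (- (?s * ?s)) \<cdot>\<^sub>m cmat X + cmat S * (cmat X * cmat (transpose_mat S))"
    unfolding adjQ unfolding Qm_def by (rule expand) (simp_all add: c)
  also have "cmat S * (cmat X * cmat (transpose_mat S)) = cmat Cm"
    unfolding SXS[symmetric] by (simp add: cmat_dims)
  also have "- (?s * ?s) = complex_of_real (\<omega>\<^sup>2)" by (simp add: complex_eq_iff power2_eq_square)
  finally show ?thesis using comm_add_mat[of "complex_of_real (\<omega>\<^sup>2) \<cdot>\<^sub>m cmat X" N N "cmat Cm"] by simp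
qed

definition "Gm \<omega> = cmat (transpose_mat Rm) * Pm \<omega> * cmat Bm"
definition "Fm \<omega> = cmat (transpose_mat Rm) * Pm \<omega> * cmat Y"

lemma G_c[simp]: "Gm \<omega> \<in> carrier_mat m (n + m)"
  unfolding Gm_def by (intro mult_carrier_mat[of _ m N] P_props(1)) simp_all

lemma Sigma_G: "Sigma_tau n m src tgt w eps sw sv (\<i> * complex_of_real \<omega>) = Gm \<omega>"
  unfolding Sigma_eq Gm_def Pm_def Qm_def ..

lemma key: "Gm \<omega> * mat_adjoint (Gm \<omega>) + complex_of_real (\<omega>\<^sup>2) \<cdot>\<^sub>m (Fm \<omega> * mat_adjoint (Fm \<omega>))
  = cmat (Z_mat n m src tgt w eps sw sv)"
proof -
  let ?s = "\<i> * complex_of_real \<omega>"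
  let ?c = "complex_of_real (\<omega>\<^sup>2)"
  let ?P = "Pm \<omega>" and ?Q = "Qm ?s"
  let ?Rt = "cmat (transpose_mat Rm)"
  have e1: "Gm \<omega> * mat_adjoint (Gm \<omega>) + ?c \<cdot>\<^sub>m (Fm \<omega> * mat_adjoint (Fm \<omega>)) =
     ?Rt * (?P * ((cmat Cm + ?c \<cdot>\<^sub>m cmat X) * (mat_adjoint ?P * cmat Rm)))"
    unfolding Gm_def Fm_def Cm_def X_def by (simp add: adj_dims adj_cmat msimps cmat_dims)
  have PQ: "mat_adjoint ?Q * mat_adjoint ?P = 1\<^sub>m N"
    using arg_cong[OF P_props(3)[of \<omega>], of mat_adjoint] by (simp add: adj_dims)
  have e3: "?P * ((?Q * cmat X * mat_adjoint ?Q) * (mat_adjoint ?P * cmat Rm)) = cmat X * cmat Rm"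
  proof -
    have "?P * ((?Q * cmat X * mat_adjoint ?Q) * (mat_adjoint ?P * cmat Rm)) =
      ?P * (?Q * (cmat X * (mat_adjoint ?Q * (mat_adjoint ?P * cmat Rm))))" by (simp add: msimps)
    also have "\<dots> = cmat X * (mat_adjoint ?Q * (mat_adjoint ?P * cmat Rm))"
      by (rule inv_cancel_l[OF P_props(3)]) simp_all
    also have "mat_adjoint ?Q * (mat_adjoint ?P * cmat Rm) = cmat Rm"
      by (rule inv_cancel_l[OF PQ]) simp_all
    finally show ?thesis .
  qed
  have "Gm \<omega> * mat_adjoint (Gm \<omega>) + ?c \<cdot>\<^sub>m (Fm \<omega> * mat_adjoint (Fm \<omega>)) = ?Rt * (cmat X * cmat Rm)"
    unfolding e1 QXQ[symmetric] e3 ..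
  also have "\<dots> = cmat (Z_mat n m src tgt w eps sw sv)" unfolding Z_eq by (simp add: cmat_dims)
  finally show ?thesis .
qed

end


context ctx begin

lemma m_pos: "m > 0" using N1 by simp
lemma p_pos: "n + m > 0" using n2 by simp

lemma F_c[simp]: "Fm \<omega> \<in> carrier_mat m (n + m)"
  unfolding Fm_def by (intro mult_carrier_mat[of _ m N] P_props(1)) simp_all

lemma GG_c: "Gm \<omega> * mat_adjoint (Gm \<omega>) \<in> carrier_mat m m"
  by (rule mult_carrier_mat[OF G_c adj_carrier[OF G_c]])
lemma FF_c: "Fm \<omega> * mat_adjoint (Fm \<omega>) \<in> carrier_mat m m"
  by (rule mult_carrier_mat[OF F_c adj_carrier[OF F_c]])

lemma Zc_herm: "cmat (Z_mat n m src tgt w eps sw sv) = Gm 0 * mat_adjoint (Gm 0)"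
proof -
  have c: "Gm 0 * mat_adjoint (Gm 0) \<in> carrier_mat m m" by (rule GG_c)
  have z: "0 \<cdot>\<^sub>m (Fm 0 * mat_adjoint (Fm 0)) = 0\<^sub>m m m" using FF_c[of 0] by (intro eq_matI) auto
  show ?thesis using key[of 0] right_add_zero_mat[OF c] z by simp
qed

lemma Zc_c: "cmat (Z_mat n m src tgt w eps sw sv) \<in> carrier_mat m m"
  unfolding Zc_herm by (rule GG_c)

lemma qf_le:
  assumes u: "u \<in> carrier_vec m"
  shows "Re ((Gm \<omega> * mat_adjoint (Gm \<omega>) *\<^sub>v u) \<bullet>c u) \<le> Re ((cmat (Z_mat n m src tgt w eps sw sv) *\<^sub>v u) \<bullet>c u)"
proof -
  let ?H = "Gm \<omega> * mat_adjoint (Gm \<omega>)" and ?E = "Fm \<omega> * mat_adjoint (Fm \<omega>)"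
  let ?c = "complex_of_real (\<omega>\<^sup>2)"
  have H: "?H \<in> carrier_mat m m" by (rule GG_c)
  have E: "?E \<in> carrier_mat m m" by (rule FF_c)
  have Hu: "?H *\<^sub>v u \<in> carrier_vec m" by (rule mult_mat_vec_carrier[OF H u])
  have Eu: "?E *\<^sub>v u \<in> carrier_vec m" by (rule mult_mat_vec_carrier[OF E u])
  have Fu: "mat_adjoint (Fm \<omega>) *\<^sub>v u \<in> carrier_vec (n + m)"
    by (rule mult_mat_vec_carrier[OF _ u]) (use F_c[of \<omega>] in simp)
  have "cmat (Z_mat n m src tgt w eps sw sv) *\<^sub>v u = ?H *\<^sub>v u + (?c \<cdot>\<^sub>m ?E) *\<^sub>v u"
    unfolding key[of \<omega>, symmetric] by (rule add_mult_distrib_mat_vec[OF H _ u]) (use E in simp)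
  also have "(?c \<cdot>\<^sub>m ?E) *\<^sub>v u = ?c \<cdot>\<^sub>v (?E *\<^sub>v u)" by (rule smult_mat_vec) (use E u carrier_matD[OF F_c[of \<omega>]] in simp)
  finally have "cmat (Z_mat n m src tgt w eps sw sv) *\<^sub>v u = ?H *\<^sub>v u + ?c \<cdot>\<^sub>v (?E *\<^sub>v u)" .
  then have "(cmat (Z_mat n m src tgt w eps sw sv) *\<^sub>v u) \<bullet>c u = (?H *\<^sub>v u) \<bullet>c u + ?c * ((?E *\<^sub>v u) \<bullet>c u)"
    using Hu Eu u by (simp add: add_scalar_prod_distrib[of _ m])
  moreover have "(?E *\<^sub>v u) \<bullet>c u = (mat_adjoint (Fm \<omega>) *\<^sub>v u) \<bullet>c (mat_adjoint (Fm \<omega>) *\<^sub>v u)"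
  proof -
    have "?E *\<^sub>v u = Fm \<omega> *\<^sub>v (mat_adjoint (Fm \<omega>) *\<^sub>v u)"
      by (rule assoc_mult_mat_vec[OF F_c _ u]) (use F_c[of \<omega>] in simp)
    also have "\<dots> \<bullet>c u = (mat_adjoint (Fm \<omega>) *\<^sub>v u) \<bullet>c (mat_adjoint (Fm \<omega>) *\<^sub>v u)"
      using adj_inner[OF F_c Fu u] by simp
    finally show ?thesis .
  qed
  moreover have "Re ((mat_adjoint (Fm \<omega>) *\<^sub>v u) \<bullet>c (mat_adjoint (Fm \<omega>) *\<^sub>v u)) \<ge> 0"
    by (rule cnorm_props(2)[OF Fu])
  ultimately show ?thesis by simp
qed

lemma rho_le: "spectral_radius (Gm \<omega> * mat_adjoint (Gm \<omega>)) \<le> spectral_radius (cmat (Z_mat n m src tgt w eps sw sv))"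
proof -
  let ?H = "Gm \<omega> * mat_adjoint (Gm \<omega>)" and ?Z = "cmat (Z_mat n m src tgt w eps sw sv)"
  have H: "?H \<in> carrier_mat m m" by (rule GG_c)
  have aZ: "mat_adjoint ?Z = ?Z" unfolding Zc_herm by (rule adj_herm[OF G_c])
  have "Max (Re ` {k. eigenvalue ?H k}) \<le> spectral_radius ?Z"
  proof (rule Max.boundedI)
    show "finite (Re ` {k. eigenvalue ?H k})" using spec_fin[OF H] by simp
    show "Re ` {k. eigenvalue ?H k} \<noteq> {}" using spec_ne[OF H m_pos] by simp
    fix x assume "x \<in> Re ` {k. eigenvalue ?H k}"
    then obtain k where k: "eigenvalue ?H k" "x = Re k" by auto
    obtain u where u: "u \<in> carrier_vec m" "u \<noteq> 0\<^sub>v m" "?H *\<^sub>v u = k \<cdot>\<^sub>v u"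
      using k(1) H unfolding eigenvalue_def eigenvector_def by auto
    have pos: "Re (u \<bullet>c u) > 0" using cnorm_props(2,4)[OF u(1)] u(2) by fastforce
    have "Re ((?H *\<^sub>v u) \<bullet>c u) = Re (k * (u \<bullet>c u))" unfolding u(3) using u(1) by simp
    also have "\<dots> = Re k * Re (u \<bullet>c u)"
      by (subst cnorm_props(3)[OF u(1)]) simp
    finally have "Re k * Re (u \<bullet>c u) \<le> Re ((?Z *\<^sub>v u) \<bullet>c u)" using qf_le[OF u(1), of \<omega>] by simp
    also have "\<dots> \<le> spectral_radius ?Z * Re (u \<bullet>c u)" by (rule rayleigh[OF Zc_c aZ m_pos u(1)])
    finally show "x \<le> spectral_radius ?Z" using pos k(2) by (simp add: mult_le_cancel_right_pos)
  qed
  then show ?thesis using spec_rad_adj(1)[OF G_c m_pos] by simp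
qed

lemma sigma_le: "sigma_max (Gm \<omega>) \<le> sigma_max (Gm 0)"
proof -
  have "(sigma_max (Gm \<omega>))\<^sup>2 = spectral_radius (Gm \<omega> * mat_adjoint (Gm \<omega>))"
    by (rule sigma_sq[OF G_c m_pos p_pos])
  also have "\<dots> \<le> spectral_radius (cmat (Z_mat n m src tgt w eps sw sv))" by (rule rho_le)
  also have "\<dots> = (sigma_max (Gm 0))\<^sup>2" unfolding Zc_herm by (rule sigma_sq[OF G_c m_pos p_pos, symmetric])
  finally show ?thesis using sigma_nonneg[OF G_c p_pos] by (rule power2_le_imp_le)
qed

lemma main: "(hinf_norm (Sigma_tau n m src tgt w eps sw sv))\<^sup>2 = sigma_max (cmat (Z_mat n m src tgt w eps sw sv))"
proof -
  have "hinf_norm (Sigma_tau n m src tgt w eps sw sv) = Sup (range (\<lambda>\<omega>. sigma_max (Gm \<omega>)))"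
    unfolding hinf_norm_def Sigma_G ..
  also have "\<dots> = sigma_max (Gm 0)"
    by (rule cSup_eq_maximum) (auto intro: sigma_le)
  finally have h: "hinf_norm (Sigma_tau n m src tgt w eps sw sv) = sigma_max (Gm 0)" .
  have "(sigma_max (Gm 0))\<^sup>2 = spectral_radius (Gm 0 * mat_adjoint (Gm 0))"
    by (rule sigma_sq[OF G_c m_pos p_pos])
  also have "\<dots> = sigma_max (Gm 0 * mat_adjoint (Gm 0))"
    by (rule sigma_herm[OF G_c m_pos p_pos, symmetric])
  finally show ?thesis unfolding h Zc_herm .
qed

end

theorem theorem1:
  fixes n m :: nat and src tgt :: "nat \<Rightarrow> nat" and w eps :: "nat \<Rightarrow> real"
    and sigma_w sigma_v :: real
  assumes "n \<ge> 2"
    and "valid_graph n m src tgt"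
    and "connected_in n src tgt {..<m}"
    and "n - 1 \<le> m"
    and "spanning_tree n src tgt {..<n - 1}"
    and "\<forall>l<m. w l > 0"
    and "\<forall>i<n. eps i > 0"
  shows "(hinf_norm (Sigma_tau n m src tgt w eps sigma_w sigma_v))\<^sup>2
           = sigma_max (cmat (Z_mat n m src tgt w eps sigma_w sigma_v))"
proof -
  interpret ctx n m src tgt w eps sigma_w sigma_v
    using assms by unfold_locales auto
  show ?thesis by (rule main)
qed


end
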